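(* Let $d\ge 2$, $c\ge 0$ and $\nu_l=\sqrt{(l+\tfrac d2-1)^2+c^2}$ for integers $l\ge 0$. For every $w>0$ the equation $$\sqrt{h^2-1}-\operatorname{arcsec}(h)=\frac{\pi}{w}$$ has a unique solution $h=h(w)>1$. Moreover, for any sequence of pairs of integers $(l,k)$ with $l\ge0$, $k\ge1$, $l,k\to\infty$ and $l/k\to w>0$, we have $$\frac{j_{\nu_l,k}}{\nu_l}\to h(w).$$
   Context: $J_\nu$ denotes the Bessel function of the first kind of order $\nu$, and $j_{\nu,k}$ denotes its $k$-th positive zero. $\operatorname{arcsec}(z)=\arccos(1/z)$ for $z\ge1$. *)

theory Defs
  imports "HOL-Analysis.Analysis"
begin

definition bessel_J :: "real \<Rightarrow> real \<Rightarrow> real" where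
  "bessel_J nu x = (\<Sum>m. (-1) ^ m / (fact m * Gamma (real m + nu + 1)) * (x / 2) powr (2 * real m + nu))"

definition bessel_zero :: "real \<Rightarrow> nat \<Rightarrow> real" where
  "bessel_zero nu k = (THE x. 0 < x \<and> bessel_J nu x = 0 \<and>
      finite {y. 0 < y \<and> y < x \<and> bessel_J nu y = 0} \<and>
      card {y. 0 < y \<and> y < x \<and> bessel_J nu y = 0} = k - 1)"

definition arcsec :: "real \<Rightarrow> real" where
  "arcsec z = arccos (1 / z)"

end

theory Submission
  imports Defs "HOL-Analysis.Analysis"
begin


definition ba :: "real \<Rightarrow> nat \<Rightarrow> real" where
  "ba \<nu> n = (-1) ^ n / (fact n * Gamma (real n + \<nu> + 1))"

lemma Gamma_rec_pos: "x > 0 \<Longrightarrow> Gamma (x + 1) = x * Gamma (x::real)"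
  by (rule Gamma_plus1) (auto elim!: nonpos_Ints_cases)

lemma ba_rec:
  assumes "\<nu> \<ge> 0"
  shows "ba \<nu> (Suc n) * (real n + 1) * (real n + \<nu> + 1) = - ba \<nu> n"
proof -
  have g: "Gamma (real (Suc n) + \<nu> + 1) = (real n + \<nu> + 1) * Gamma (real n + \<nu> + 1)"
    using Gamma_rec_pos[of "real n + \<nu> + 1"] assms by (simp add: add_ac)
  have "Gamma (real n + \<nu> + 1) > 0" by (rule Gamma_real_pos) (use assms in simp)
  then have gp: "Gamma (real n + \<nu> + 1) \<noteq> 0" by simp
  have p: "real n + \<nu> + 1 \<noteq> 0" using assms by simp
  have p1: "real n + 1 \<noteq> 0" by simp
  have "ba \<nu> (Suc n) = - ba \<nu> n / ((real n + 1) * (real n + \<nu> + 1))"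
    unfolding ba_def g by (simp add: fact_Suc algebra_simps)
  moreover have "(real n + 1) * (real n + \<nu> + 1) \<noteq> 0" using p p1 by simp
  ultimately have "ba \<nu> (Suc n) * ((real n + 1) * (real n + \<nu> + 1)) = - ba \<nu> n"
    by (metis nonzero_eq_divide_eq)
  then show ?thesis by (simp only: mult.assoc)
qed

lemma ba_summable:
  assumes "\<nu> \<ge> 0"
  shows "summable (\<lambda>n. ba \<nu> n * t ^ n)"
proof (rule summable_ratio_test[where c = "1/2" and N = "nat \<lceil>2 * \<bar>t\<bar>\<rceil>"])
  fix n assume n: "n \<ge> nat \<lceil>2 * \<bar>t\<bar>\<rceil>"
  have r: "ba \<nu> (Suc n) = - ba \<nu> n / ((real n + 1) * (real n + \<nu> + 1))"
  proof -
    have p: "(real n + 1) * (real n + \<nu> + 1) > 0" using assms by simp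
    have "ba \<nu> (Suc n) * ((real n + 1) * (real n + \<nu> + 1)) = - ba \<nu> n"
      using ba_rec[OF assms, of n] by (simp add: mult.assoc)
    then show ?thesis using p by (metis less_irrefl nonzero_eq_divide_eq)
  qed
  have n2: "2 * \<bar>t\<bar> \<le> real n" using n by linarith
  have "\<bar>t\<bar> \<le> 1/2 * ((real n + 1) * (real n + \<nu> + 1))"
  proof -
    have "real n + 1 \<le> (real n + 1) * (real n + \<nu> + 1)" using assms by (simp add: algebra_simps)
    then show ?thesis using n2 by linarith
  qed
  then have q: "\<bar>t\<bar> / ((real n + 1) * (real n + \<nu> + 1)) \<le> 1/2"
    using assms by (simp add: divide_le_eq)
  have "norm (ba \<nu> (Suc n) * t ^ Suc n) = (\<bar>t\<bar> / ((real n + 1) * (real n + \<nu> + 1))) * norm (ba \<nu> n * t ^ n)"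
    unfolding r using assms by (simp add: abs_mult power_abs abs_divide field_simps)
  also have "\<dots> \<le> 1/2 * norm (ba \<nu> n * t ^ n)"
    by (rule mult_right_mono[OF q]) simp
  finally show "norm (ba \<nu> (Suc n) * t ^ Suc n) \<le> 1/2 * norm (ba \<nu> n * t ^ n)" .
qed simp

definition BG :: "real \<Rightarrow> real \<Rightarrow> real" where
  "BG \<nu> t = (\<Sum>n. ba \<nu> n * t ^ n)"
definition BG1 :: "real \<Rightarrow> real \<Rightarrow> real" where
  "BG1 \<nu> t = (\<Sum>n. diffs (ba \<nu>) n * t ^ n)"
definition BG2 :: "real \<Rightarrow> real \<Rightarrow> real" where
  "BG2 \<nu> t = (\<Sum>n. diffs (diffs (ba \<nu>)) n * t ^ n)"

lemma summable1: "\<nu> \<ge> 0 \<Longrightarrow> summable (\<lambda>n. diffs (ba \<nu>) n * t ^ n)"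
  by (rule termdiff_converges_all) (rule ba_summable)
lemma summable2: "\<nu> \<ge> 0 \<Longrightarrow> summable (\<lambda>n. diffs (diffs (ba \<nu>)) n * t ^ n)"
  by (rule termdiff_converges_all) (rule summable1)

lemma BG_deriv: "\<nu> \<ge> 0 \<Longrightarrow> (BG \<nu> has_real_derivative BG1 \<nu> t) (at t)"
  unfolding BG_def[abs_def] BG1_def
  by (rule termdiffs_strong_converges_everywhere) (rule ba_summable)
lemma BG1_deriv: "\<nu> \<ge> 0 \<Longrightarrow> (BG1 \<nu> has_real_derivative BG2 \<nu> t) (at t)"
  unfolding BG1_def[abs_def] BG2_def
  by (rule termdiffs_strong_converges_everywhere) (rule summable1)

lemma BG_ode:
  assumes "\<nu> \<ge> 0"
  shows "t * BG2 \<nu> t + (\<nu> + 1) * BG1 \<nu> t + BG \<nu> t = 0"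
proof -
  define c where "c n = (if n = 0 then 0 else diffs (diffs (ba \<nu>)) (n - 1)) + (\<nu> + 1) * diffs (ba \<nu>) n + ba \<nu> n" for n
  have c0: "c n = 0" for n
  proof (cases n)
    case 0
    then show ?thesis using ba_rec[OF assms, of 0] by (simp add: c_def diffs_def algebra_simps)
  next
    case (Suc m)
    have "ba \<nu> (Suc (Suc m)) * (real (Suc m) + 1) * (real (Suc m) + \<nu> + 1) = - ba \<nu> (Suc m)"
      by (rule ba_rec[OF assms])
    then show ?thesis using Suc by (simp add: c_def diffs_def algebra_simps)
  qed
  have s2: "(\<lambda>n. diffs (diffs (ba \<nu>)) n * t ^ n) sums BG2 \<nu> t"
    unfolding BG2_def using summable2[OF assms] by (simp add: summable_sums)
  have s2': "(\<lambda>n. (if n = 0 then 0 else diffs (diffs (ba \<nu>)) (n - 1)) * t ^ n) sums (t * BG2 \<nu> t)"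
  proof -
    have "(\<lambda>n. t * (diffs (diffs (ba \<nu>)) n * t ^ n)) sums (t * BG2 \<nu> t)"
      by (rule sums_mult[OF s2])
    then have "(\<lambda>n. (if Suc n = 0 then 0 else diffs (diffs (ba \<nu>)) (Suc n - 1)) * t ^ Suc n) sums (t * BG2 \<nu> t)"
      by (simp add: algebra_simps)
    then show ?thesis
      using sums_Suc_iff[of "\<lambda>n. (if n = 0 then 0 else diffs (diffs (ba \<nu>)) (n - 1)) * t ^ n" "t * BG2 \<nu> t"]
      by simp
  qed
  have s1: "(\<lambda>n. (\<nu> + 1) * diffs (ba \<nu>) n * t ^ n) sums ((\<nu> + 1) * BG1 \<nu> t)"
    unfolding BG1_def using sums_mult[OF summable_sums[OF summable1[OF assms]], of "\<nu> + 1" t]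
    by (simp only: mult.assoc)
  have s0: "(\<lambda>n. ba \<nu> n * t ^ n) sums BG \<nu> t"
    unfolding BG_def using ba_summable[OF assms] by (simp add: summable_sums)
  have "(\<lambda>n. c n * t ^ n) sums (t * BG2 \<nu> t + (\<nu> + 1) * BG1 \<nu> t + BG \<nu> t)"
  proof -
    have e: "(\<lambda>n. c n * t ^ n) = (\<lambda>n. (if n = 0 then 0 else diffs (diffs (ba \<nu>)) (n - 1)) * t ^ n
       + (\<nu> + 1) * diffs (ba \<nu>) n * t ^ n + ba \<nu> n * t ^ n)"
      by (simp add: c_def algebra_simps)
    show ?thesis unfolding e by (intro sums_add s2' s1 s0)
  qed
  moreover have "(\<lambda>n. c n * t ^ n) sums 0" by (simp add: c0)
  ultimately show ?thesis using sums_unique2 by blast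
qed

lemma bessel_J_eq:
  assumes "\<nu> \<ge> 0" "x > 0"
  shows "bessel_J \<nu> x = (x / 2) powr \<nu> * BG \<nu> (x^2 / 4)"
proof -
  have t: "(-1) ^ m / (fact m * Gamma (real m + \<nu> + 1)) * (x / 2) powr (2 * real m + \<nu>)
      = (x / 2) powr \<nu> * (ba \<nu> m * (x^2/4) ^ m)" for m
  proof -
    have "(x / 2) powr (2 * real m + \<nu>) = (x/2) powr \<nu> * (x/2) powr (real (2*m))"
      by (simp add: powr_add mult.commute)
    also have "(x/2) powr (real (2*m)) = (x/2) ^ (2*m)"
      using powr_realpow[of "x/2" "2*m"] assms by simp
    also have "\<dots> = (x^2/4) ^ m"
      by (simp add: power_mult power_divide)
    finally show ?thesis by (simp add: ba_def)
  qed
  show ?thesis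
    unfolding bessel_J_def t BG_def
    by (rule suminf_mult[OF ba_summable[OF assms(1)]])
qed




definition W0 :: "real \<Rightarrow> real \<Rightarrow> real" where
  "W0 \<nu> x = x powr (\<nu> + 1/2) * BG \<nu> (x^2/4)"
definition W1 :: "real \<Rightarrow> real \<Rightarrow> real" where
  "W1 \<nu> x = x powr (\<nu> + 1/2) * ((\<nu> + 1/2) / x * BG \<nu> (x^2/4) + x / 2 * BG1 \<nu> (x^2/4))"
definition Wq :: "real \<Rightarrow> real \<Rightarrow> real" where
  "Wq \<nu> x = 1 - (\<nu>^2 - 1/4) / x^2"

lemma BG_deriv_comp:
  assumes "\<nu> \<ge> 0"
  shows "((\<lambda>x. BG \<nu> (x^2/4)) has_real_derivative (x/2 * BG1 \<nu> (x^2/4))) (at x)"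
proof -
  have "((\<lambda>x. BG \<nu> (x^2/4)) has_real_derivative (BG1 \<nu> (x^2/4) * (2 * x / 4))) (at x)"
    by (rule DERIV_chain2[OF BG_deriv[OF assms]]) (auto intro!: derivative_eq_intros)
  then show ?thesis by (simp add: algebra_simps)
qed

lemma BG1_deriv_comp:
  assumes "\<nu> \<ge> 0"
  shows "((\<lambda>x. BG1 \<nu> (x^2/4)) has_real_derivative (x/2 * BG2 \<nu> (x^2/4))) (at x)"
proof -
  have "((\<lambda>x. BG1 \<nu> (x^2/4)) has_real_derivative (BG2 \<nu> (x^2/4) * (2 * x / 4))) (at x)"
    by (rule DERIV_chain2[OF BG1_deriv[OF assms]]) (auto intro!: derivative_eq_intros)
  then show ?thesis by (simp add: algebra_simps)
qed

lemma powr_deriv':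
  assumes "x > 0"
  shows "((\<lambda>x. x powr p) has_real_derivative p / x * x powr p) (at x)"
proof -
  have "((\<lambda>x. x powr p) has_real_derivative p * x powr (p - 1)) (at x)"
    by (rule has_real_derivative_powr[OF assms])
  moreover have "p * x powr (p - 1) = p / x * x powr p"
    using assms by (simp add: powr_diff)
  ultimately show ?thesis by simp
qed

lemma W0_deriv:
  assumes "\<nu> \<ge> 0" "x > 0"
  shows "(W0 \<nu> has_real_derivative W1 \<nu> x) (at x)"
proof -
  have "((\<lambda>x. x powr (\<nu> + 1/2) * BG \<nu> (x^2/4)) has_real_derivative
     x powr (\<nu> + 1/2) * (x/2 * BG1 \<nu> (x^2/4)) + ((\<nu> + 1/2) / x * x powr (\<nu> + 1/2)) * BG \<nu> (x^2/4)) (at x)"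
    by (rule DERIV_mult'[OF powr_deriv'[OF assms(2)] BG_deriv_comp[OF assms(1)]])
  moreover have "x powr (\<nu> + 1/2) * (x/2 * BG1 \<nu> (x^2/4)) + ((\<nu> + 1/2) / x * x powr (\<nu> + 1/2)) * BG \<nu> (x^2/4)
     = W1 \<nu> x" unfolding W1_def by (simp add: algebra_simps)
  ultimately show ?thesis unfolding W0_def[abs_def] by simp
qed

lemma alg1:
  fixes x P B Bp Bq \<nu> :: real
  assumes "x > 0"
  shows "P * ((\<nu> + 1/2) / x * (x / 2 * Bp) + - ((\<nu> + 1/2) / x^2) * B + (x / 2 * (x / 2 * Bq) + 1/2 * Bp)) +
      ((\<nu> + 1/2) / x * P) * ((\<nu> + 1/2) / x * B + x / 2 * Bp)
     = P * ((\<nu>^2 - 1/4) / x^2 * B + (x^2/4 * Bq + (\<nu> + 1) * Bp))"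
  using assms by (simp add: field_simps power2_eq_square)

lemma W1_deriv:
  assumes "\<nu> \<ge> 0" "x > 0"
  shows "(W1 \<nu> has_real_derivative (- Wq \<nu> x * W0 \<nu> x)) (at x)"
proof -
  let ?p = "\<nu> + 1/2"
  let ?t = "x^2/4"
  have dinv: "((\<lambda>x. ?p / x) has_real_derivative - (?p / x^2)) (at x)"
    using assms by (auto intro!: derivative_eq_intros simp: power2_eq_square field_simps)
  have dh: "((\<lambda>x. x / 2) has_real_derivative 1/2) (at x)"
    by (auto intro!: derivative_eq_intros)
  have da: "((\<lambda>x. ?p / x * BG \<nu> (x^2/4)) has_real_derivative ?p / x * (x/2 * BG1 \<nu> ?t) + - (?p / x^2) * BG \<nu> ?t) (at x)"
    by (rule DERIV_mult'[OF dinv BG_deriv_comp[OF assms(1)]])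
  have db: "((\<lambda>x. x / 2 * BG1 \<nu> (x^2/4)) has_real_derivative x / 2 * (x/2 * BG2 \<nu> ?t) + 1/2 * BG1 \<nu> ?t) (at x)"
    by (rule DERIV_mult'[OF dh BG1_deriv_comp[OF assms(1)]])
  have d1: "((\<lambda>x. ?p / x * BG \<nu> (x^2/4) + x / 2 * BG1 \<nu> (x^2/4)) has_real_derivative
      (?p / x * (x/2 * BG1 \<nu> ?t) + - (?p / x^2) * BG \<nu> ?t) + (x / 2 * (x/2 * BG2 \<nu> ?t) + 1/2 * BG1 \<nu> ?t)) (at x)"
    by (rule DERIV_add[OF da db])
  have dd: "(W1 \<nu> has_real_derivative
      x powr ?p * ((?p / x * (x/2 * BG1 \<nu> ?t) + - (?p / x^2) * BG \<nu> ?t) + (x / 2 * (x/2 * BG2 \<nu> ?t) + 1/2 * BG1 \<nu> ?t))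
      + (?p / x * x powr ?p) * (?p / x * BG \<nu> ?t + x / 2 * BG1 \<nu> ?t)) (at x)"
    unfolding W1_def[abs_def] by (rule DERIV_mult'[OF powr_deriv'[OF assms(2)] d1])
  have e2: "x powr ?p * ((?p / x * (x/2 * BG1 \<nu> ?t) + - (?p / x^2) * BG \<nu> ?t) + (x / 2 * (x/2 * BG2 \<nu> ?t) + 1/2 * BG1 \<nu> ?t))
      + (?p / x * x powr ?p) * (?p / x * BG \<nu> ?t + x / 2 * BG1 \<nu> ?t)
     = x powr ?p * ((\<nu>^2 - 1/4) / x^2 * BG \<nu> ?t + (?t * BG2 \<nu> ?t + (\<nu> + 1) * BG1 \<nu> ?t))"
    using alg1[OF assms(2), where P="x powr ?p" and Bp="BG1 \<nu> ?t" and \<nu>=\<nu> and B="BG \<nu> ?t" and Bq="BG2 \<nu> ?t"]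
    by simp
  have e3: "?t * BG2 \<nu> ?t + (\<nu> + 1) * BG1 \<nu> ?t = - BG \<nu> ?t"
    using BG_ode[OF assms(1), of ?t] by linarith
  have e4: "x powr ?p * ((\<nu>^2 - 1/4) / x^2 * BG \<nu> ?t + (?t * BG2 \<nu> ?t + (\<nu> + 1) * BG1 \<nu> ?t))
     = - Wq \<nu> x * W0 \<nu> x"
    unfolding e3 Wq_def W0_def by (simp only: ring_distribs mult_minus_right mult_1_left mult_1_right mult_minus_left diff_conv_add_uminus add_ac mult_ac minus_add_distrib minus_minus)
  show ?thesis by (rule DERIV_cong[OF dd trans[OF e2 e4]])
qed

lemma J_zero_iff:
  assumes "\<nu> \<ge> 0" "x > 0"
  shows "bessel_J \<nu> x = 0 \<longleftrightarrow> W0 \<nu> x = 0"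
proof -
  have e: "bessel_J \<nu> x = (x / 2) powr \<nu> * BG \<nu> (x^2 / 4)" by (rule bessel_J_eq[OF assms])
  have p1: "(x / 2) powr \<nu> > 0" "x powr (\<nu> + 1/2) > 0" using assms by auto
  show ?thesis unfolding e W0_def using p1 by auto
qed

lemma BG_0: "\<nu> \<ge> 0 \<Longrightarrow> BG \<nu> 0 > 0"
proof -
  assume a: "\<nu> \<ge> 0"
  have "BG \<nu> 0 = ba \<nu> 0"
    unfolding BG_def using powser_zero[of "ba \<nu>"] by simp
  moreover have "Gamma (\<nu> + 1) > 0" by (rule Gamma_real_pos) (use a in simp)
  ultimately show ?thesis by (simp add: ba_def add.commute)
qed

lemma W0_pos_near0:
  assumes "\<nu> \<ge> 0"
  shows "\<exists>e>0. \<forall>x. 0 < x \<and> x \<le> e \<longrightarrow> W0 \<nu> x > 0"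
proof -
  have "isCont (BG \<nu>) 0" using BG_deriv[OF assms] DERIV_isCont by blast
  then have "\<forall>r>0. \<exists>s>0. \<forall>y. y \<noteq> 0 \<and> norm (y - 0) < s \<longrightarrow> norm (BG \<nu> y - BG \<nu> 0) < r"
    unfolding isCont_def LIM_eq .
  then obtain d where d: "d > 0" "\<And>y. y \<noteq> 0 \<Longrightarrow> norm (y - 0) < d \<Longrightarrow> norm (BG \<nu> y - BG \<nu> 0) < BG \<nu> 0"
    using BG_0[OF assms] by blast
  define e where "e = min 1 d"
  have e: "e > 0" "e \<le> 1" "e \<le> d" using d by (auto simp: e_def)
  show ?thesis
  proof (intro exI[of _ e] conjI allI impI)
    fix x assume x: "0 < x \<and> x \<le> e"
    have "x^2 \<le> x" using x e by (simp add: power2_eq_square mult_le_cancel_left1)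
    then have "norm (x^2/4 - 0) < d" using x e by simp
    moreover have "x^2/4 \<noteq> 0" using x by simp
    ultimately have "norm (BG \<nu> (x^2/4) - BG \<nu> 0) < BG \<nu> 0" using d(2) by blast
    then have "BG \<nu> (x^2/4) > 0" by simp
    then show "W0 \<nu> x > 0" using x by (simp add: W0_def)
  qed (use e in auto)
qed




locale sturm =
  fixes u u' q :: "real \<Rightarrow> real"
  assumes du: "\<And>x. x > 0 \<Longrightarrow> (u has_real_derivative u' x) (at x)"
    and du': "\<And>x. x > 0 \<Longrightarrow> (u' has_real_derivative (- q x * u x)) (at x)"
    and qc: "continuous_on {0<..} q"
    and nz: "\<And>z. z > 0 \<Longrightarrow> \<exists>e. 0 < e \<and> e < z \<and> u e \<noteq> 0"
begin

lemma neg: "sturm (\<lambda>x. - u x) (\<lambda>x. - u' x) q"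
proof
  fix x :: real assume "x > 0"
  show "((\<lambda>x. - u x) has_real_derivative - u' x) (at x)" using du[OF \<open>x > 0\<close>] by (rule DERIV_minus)
  show "((\<lambda>x. - u' x) has_real_derivative - q x * - u x) (at x)"
    using DERIV_minus[OF du'[OF \<open>x > 0\<close>]] by simp
next
  show "continuous_on {0<..} q" by (rule qc)
next
  fix z :: real assume "z > 0" then show "\<exists>e. 0 < e \<and> e < z \<and> - u e \<noteq> 0" using nz by auto
qed

lemma u_cont: "S \<subseteq> {0<..} \<Longrightarrow> continuous_on S u"
proof (rule continuous_at_imp_continuous_on, rule ballI)
  fix x assume "S \<subseteq> {0<..}" "x \<in> S"
  then have "x > 0" by auto
  then show "isCont u x" by (rule DERIV_isCont[OF du])
qed

lemma u'_cont: "S \<subseteq> {0<..} \<Longrightarrow> continuous_on S u'"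
proof (rule continuous_at_imp_continuous_on, rule ballI)
  fix x assume "S \<subseteq> {0<..}" "x \<in> S"
  then have "x > 0" by auto
  then show "isCont u' x" by (rule DERIV_isCont[OF du'])
qed

lemma q_bounded:
  assumes "0 < e" 
  shows "\<exists>K\<ge>0. \<forall>x\<in>{e..z}. \<bar>q x\<bar> \<le> K"
proof -
  have "continuous_on {e..z} q" using qc by (rule continuous_on_subset) (use assms in auto)
  then have "compact (q ` {e..z})" by (rule compact_continuous_image) simp
  then have "bounded (q ` {e..z})" by (rule compact_imp_bounded)
  then obtain K where "\<forall>y\<in>q ` {e..z}. norm y \<le> K" unfolding bounded_iff by blast
  then show ?thesis by (intro exI[of _ "max K 0"]) auto
qed

lemma no_double_zero:
  assumes z: "z > 0" "u z = 0" "u' z = 0"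
  shows False
proof -
  obtain e where e: "0 < e" "e < z" "u e \<noteq> 0" using nz[OF z(1)] by blast
  obtain K where K: "K \<ge> 0" "\<And>x. x \<in> {e..z} \<Longrightarrow> \<bar>q x\<bar> \<le> K" using q_bounded[OF e(1), of z] by blast
  define E where "E x = (u' x)^2 + (u x)^2" for x
  define phi where "phi x = E x * exp ((K + 1) * x)" for x
  have dE: "(E has_real_derivative 2 * u' x * (- q x * u x) + 2 * u x * u' x) (at x)" if "x > 0" for x
    unfolding E_def[abs_def] using du[OF that] du'[OF that]
    by (auto intro!: derivative_eq_intros simp: algebra_simps)
  have dphi: "(phi has_real_derivative (2 * u' x * (- q x * u x) + 2 * u x * u' x) * exp ((K + 1) * x)
      + E x * (exp ((K + 1) * x) * (K + 1))) (at x)" if "x > 0" for x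
    unfolding phi_def[abs_def] using dE[OF that]
    by (auto intro!: derivative_eq_intros)
  have "phi e \<le> phi z"
  proof (rule DERIV_nonneg_imp_increasing_open[of e z phi])
    show "e \<le> z" using e by simp
    fix x assume x: "e < x" "x < z"
    have qx: "\<bar>q x\<bar> \<le> K" using K(2)[of x] x by simp
    have ee: "2 * u' x * (- q x * u x) + 2 * u x * u' x = (2 * u x * u' x) * (1 - q x)"
      by (simp add: algebra_simps)
    have "\<bar>2 * u' x * (- q x * u x) + 2 * u x * u' x\<bar> = \<bar>2 * u x * u' x\<bar> * \<bar>1 - q x\<bar>"
      unfolding ee abs_mult ..
    also have "\<dots> \<le> E x * (K + 1)"
    proof (rule mult_mono)
      have "0 \<le> (u x - u' x)^2" "0 \<le> (u x + u' x)^2" by simp_all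
      then show "\<bar>2 * u x * u' x\<bar> \<le> E x" unfolding E_def by (simp add: abs_le_iff power2_eq_square algebra_simps)
      show "\<bar>1 - q x\<bar> \<le> K + 1" using qx by linarith
    qed (auto simp: E_def)
    finally have "0 \<le> (2 * u' x * (- q x * u x) + 2 * u x * u' x) + E x * (K + 1)" by linarith
    then have "0 \<le> ((2 * u' x * (- q x * u x) + 2 * u x * u' x) + E x * (K + 1)) * exp ((K + 1) * x)"
      by simp
    then show "\<exists>y. (phi has_real_derivative y) (at x) \<and> 0 \<le> y"
      using dphi[of x] x e by (intro exI[of _ _]) (auto simp: algebra_simps)
  next
    show "continuous_on {e..z} phi"
    proof (rule continuous_at_imp_continuous_on, rule ballI)
      fix x assume "x \<in> {e..z}"
      then have "x > 0" using e by auto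
      then show "isCont phi x" by (rule DERIV_isCont[OF dphi])
    qed
  qed
  moreover have "phi z = 0" using z by (simp add: phi_def E_def)
  moreover have "phi e > 0"
  proof -
    have "(u e)^2 > 0" using e(3) by simp
    then have "E e > 0" unfolding E_def by (simp add: add_nonneg_pos)
    then show ?thesis unfolding phi_def by simp
  qed
  ultimately show False by simp
qed

end



context sturm begin

lemma nz_pos:
  assumes S: "S \<subseteq> {0<..}" "\<And>x y. x \<in> S \<Longrightarrow> y \<in> S \<Longrightarrow> {x..y} \<subseteq> S"
    and nzS: "\<forall>x\<in>S. u x \<noteq> 0" and c: "c \<in> S" "u c > 0" and x: "x \<in> S"
  shows "u x > 0"
proof (rule ccontr)
  assume "\<not> u x > 0"
  then have ux: "u x \<le> 0" by simp
  show False
  proof (cases "x \<le> c")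
    case True
    have "continuous_on {x..c} u" by (rule u_cont) (use S c x in blast)
    then obtain y where "x \<le> y" "y \<le> c" "u y = 0" using IVT'[of u x 0 c] ux c True by auto
    moreover have "y \<in> S" using S(2)[OF x c(1)] \<open>x \<le> y\<close> \<open>y \<le> c\<close> by auto
    ultimately show False using nzS by auto
  next
    case False
    have "continuous_on {c..x} u" by (rule u_cont) (use S c x in blast)
    then obtain y where "c \<le> y" "y \<le> x" "u y = 0" using IVT2'[of u x 0 c] ux c False by auto
    moreover have "y \<in> S" using S(2)[OF c(1) x] \<open>c \<le> y\<close> \<open>y \<le> x\<close> by auto
    ultimately show False using nzS by auto
  qed
qed

lemma dW:
  assumes "x > 0"
  shows "((\<lambda>x. u' x * sin (s * (x - c)) - u x * (s * cos (s * (x - c)))) has_real_derivative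
     (s^2 - q x) * u x * sin (s * (x - c))) (at x)"
  using du[OF assms] du'[OF assms]
  by (auto intro!: derivative_eq_intros simp: algebra_simps power2_eq_square)

lemma W_cont:
  assumes "S \<subseteq> {0<..}"
  shows "continuous_on S (\<lambda>x. u' x * sin (s * (x - c)) - u x * (s * cos (s * (x - c))))"
  by (intro continuous_intros u_cont u'_cont assms)

lemma sturm_pos_core:
  assumes a: "a > 0" and m: "m > 0" and qm: "\<forall>x\<in>{a..a + pi / sqrt m}. q x \<ge> m"
    and nzz: "\<forall>x\<in>{a<..a + pi / sqrt m}. u x \<noteq> 0" and pos: "u (a + pi / sqrt m) > 0"
  shows False
proof -
  define s where "s = sqrt m"
  define b where "b = a + pi / s"
  have s: "s > 0" "s^2 = m" using m by (auto simp: s_def)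
  have ab: "a < b" using s by (simp add: b_def)
  have upos: "u x > 0" if "x \<in> {a<..b}" for x
    by (rule nz_pos[of "{a<..b}" b]) (use a nzz pos that in \<open>auto simp: b_def s_def\<close>)
  have ua: "u a \<ge> 0"
  proof (rule ccontr)
    assume "\<not> u a \<ge> 0"
    moreover have "continuous_on {a..b} u" by (rule u_cont) (use a in auto)
    ultimately obtain y where y: "a \<le> y" "y \<le> b" "u y = 0" using IVT'[of u a 0 b] upos[of b] ab by auto
    then have "y \<noteq> a" using \<open>\<not> u a \<ge> 0\<close> by auto
    then show False using upos[of y] y by auto
  qed
  define W where "W x = u' x * sin (s * (x - a)) - u x * (s * cos (s * (x - a)))" for x
  have "W a \<ge> W b"
  proof (rule DERIV_nonpos_imp_decreasing_open[of a b W])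
    show "a \<le> b" using ab by simp
    fix x assume x: "a < x" "x < b"
    have "0 \<le> sin (s * (x - a))"
    proof (rule sin_ge_zero)
      show "0 \<le> s * (x - a)" using s x by simp
      have "s * (x - a) \<le> s * (b - a)" using s x by (intro mult_left_mono) auto
      also have "\<dots> = pi" using s by (simp add: b_def)
      finally show "s * (x - a) \<le> pi" .
    qed
    moreover have "q x \<ge> m" using qm x by (auto simp: b_def s_def)
    moreover have "u x > 0" using upos x by auto
    ultimately have "(s^2 - q x) * u x * sin (s * (x - a)) \<le> 0"
      using s by (simp add: mult_nonpos_nonneg mult_nonneg_nonneg)
    then show "\<exists>y. (W has_real_derivative y) (at x) \<and> y \<le> 0"
      using dW[of x s a] x a unfolding W_def[abs_def] by auto
  next
    show "continuous_on {a..b} W" unfolding W_def[abs_def] by (rule W_cont) (use a in auto)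
  qed
  moreover have "W a = - u a * s" by (simp add: W_def)
  moreover have "W b = u b * s"
  proof -
    have "s * (b - a) = pi" using s by (simp add: b_def)
    then show ?thesis by (simp add: W_def)
  qed
  moreover have "u b > 0" using upos ab by auto
  moreover have "u b * s > 0" using \<open>u b > 0\<close> s by simp
  moreover have "u a * s \<ge> 0" using ua s by simp
  ultimately show False by linarith
qed

lemma sturm_lower:
  assumes a: "a > 0" and m: "m > 0" and qm: "\<forall>x\<in>{a..a + pi / sqrt m}. q x \<ge> m"
  shows "\<exists>z. a < z \<and> z \<le> a + pi / sqrt m \<and> u z = 0"
proof (rule ccontr)
  assume "\<not> ?thesis"
  then have nzz: "\<forall>x\<in>{a<..a + pi / sqrt m}. u x \<noteq> 0" by auto
  have "a < a + pi / sqrt m" using m by simp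
  then have "u (a + pi / sqrt m) \<noteq> 0" using nzz by auto
  then consider "u (a + pi / sqrt m) > 0" | "- u (a + pi / sqrt m) > 0" by linarith
  then show False
  proof cases
    case 1 then show False using sturm_pos_core[OF a m qm nzz] by blast
  next
    case 2 then show False using sturm.sturm_pos_core[OF neg a m qm] nzz by auto
  qed
qed

lemma sep_core:
  assumes z1: "z1 > 0" and zz: "z1 < zs" and u1: "u z1 = 0" and us: "u zs = 0" and M: "M > 0"
    and close: "zs - z1 < pi / sqrt M" and qM: "\<forall>x\<in>{z1..zs}. q x \<le> M"
    and upos: "\<forall>x\<in>{z1<..<zs}. u x > 0"
  shows False
proof -
  define s where "s = sqrt M"
  have s: "s > 0" "s^2 = M" using M by (auto simp: s_def)
  define W where "W x = u' x * sin (s * (x - z1)) - u x * (s * cos (s * (x - z1)))" for x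
  have "W z1 \<le> W zs"
  proof (rule DERIV_nonneg_imp_increasing_open[of z1 zs W])
    show "z1 \<le> zs" using zz by simp
    fix x assume x: "z1 < x" "x < zs"
    have "0 \<le> sin (s * (x - z1))"
    proof (rule sin_ge_zero)
      show "0 \<le> s * (x - z1)" using s x by simp
      have "s * (x - z1) \<le> s * (zs - z1)" using s x by (intro mult_left_mono) auto
      also have "\<dots> \<le> pi" using s close by (simp add: s_def pos_less_divide_eq mult.commute less_imp_le)
      finally show "s * (x - z1) \<le> pi" .
    qed
    moreover have "q x \<le> M" using qM x by auto
    moreover have "u x > 0" using upos x by auto
    ultimately have "0 \<le> (s^2 - q x) * u x * sin (s * (x - z1))"
      using s by simp
    then show "\<exists>y. (W has_real_derivative y) (at x) \<and> 0 \<le> y"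
      using dW[of x s z1] x z1 unfolding W_def[abs_def] by auto
  next
    show "continuous_on {z1..zs} W" unfolding W_def[abs_def] by (rule W_cont) (use z1 in auto)
  qed
  moreover have "W z1 = 0" using u1 by (simp add: W_def)
  moreover have "W zs = u' zs * sin (s * (zs - z1))" using us by (simp add: W_def)
  moreover have "sin (s * (zs - z1)) > 0"
  proof (rule sin_gt_zero)
    show "0 < s * (zs - z1)" using s zz by simp
    show "s * (zs - z1) < pi" using s close by (simp add: s_def pos_less_divide_eq mult.commute)
  qed
  ultimately have "u' zs \<ge> 0" by (simp add: zero_le_mult_iff)
  moreover have "\<not> u' zs > 0"
  proof
    assume "u' zs > 0"
    then obtain d where d: "d > 0" "\<And>h. h > 0 \<Longrightarrow> h < d \<Longrightarrow> u (zs - h) < u zs"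
      using DERIV_pos_inc_left[OF du[of zs]] z1 zz by force
    define h where "h = min (d/2) ((zs - z1)/2)"
    have h1: "h \<le> (zs - z1)/2" "h \<le> d/2" unfolding h_def by (rule min.cobounded2, rule min.cobounded1)
    have h: "h > 0" "h < d" "zs - h > z1" using d zz h1 by (auto simp: h_def)
    have "u (zs - h) < 0" using d(2)[OF h(1,2)] us by simp
    moreover have "u (zs - h) > 0" using upos h by auto
    ultimately show False by simp
  qed
  ultimately have "u' zs = 0" by simp
  then show False using no_double_zero[of zs] us z1 zz by simp
qed

lemma separation:
  assumes z1: "z1 > 0" and z12: "z1 < z2" and u1: "u z1 = 0" and u2: "u z2 = 0" and M: "M > 0"
    and qM: "\<forall>x\<in>{z1..z2}. q x \<le> M"
  shows "z2 - z1 \<ge> pi / sqrt M"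
proof (rule ccontr)
  assume "\<not> ?thesis"
  then have close: "z2 - z1 < pi / sqrt M" by simp
  define Z where "Z = {x. z1 < x \<and> x \<le> z2 \<and> u x = 0}"
  define zs where "zs = Inf Z"
  have Zne: "Z \<noteq> {}" and z2Z: "z2 \<in> Z" using z12 u2 by (auto simp: Z_def)
  have bdd: "bdd_below Z" unfolding Z_def by (rule bdd_belowI[of _ z1]) auto
  have zs_le: "zs \<le> y" if "y \<in> Z" for y unfolding zs_def by (rule cInf_lower[OF that bdd])
  have zs_ge: "z1 \<le> zs" unfolding zs_def by (rule cInf_greatest[OF Zne]) (auto simp: Z_def)
  have zs_z2: "zs \<le> z2" using zs_le[OF z2Z] .
  have approx: "\<exists>y\<in>Z. y < zs + e" if "e > 0" for e
    using cInf_less_iff[OF Zne bdd, of "zs + e"] that by (simp add: zs_def)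
  have uzs: "u zs = 0"
  proof (rule ccontr)
    assume ne: "u zs \<noteq> 0"
    have "isCont u zs" using DERIV_isCont[OF du[of zs]] zs_ge z1 by simp
    then have "(u \<longlongrightarrow> u zs) (at zs)" by (simp add: isCont_def)
    then have "eventually (\<lambda>y. u y \<noteq> 0) (at zs)" using ne by (rule tendsto_imp_eventually_ne)
    then obtain d where d: "d > 0" "\<And>y. y \<noteq> zs \<Longrightarrow> dist y zs < d \<Longrightarrow> u y \<noteq> 0"
      unfolding eventually_at by blast
    obtain y where y: "y \<in> Z" "y < zs + d" using approx[OF d(1)] by blast
    have "zs \<le> y" using zs_le[OF y(1)] .
    moreover have "u y = 0" using y by (simp add: Z_def)
    ultimately show False using d(2)[of y] y ne by (cases "y = zs") (auto simp: dist_real_def)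
  qed
  show False
  proof (cases "zs = z1")
    case True
    have "u' z1 = 0"
    proof (rule ccontr)
      assume "u' z1 \<noteq> 0"
      then have "\<exists>d>0. \<forall>h>0. h < d \<longrightarrow> u (z1 + h) \<noteq> 0"
      proof (cases "u' z1 > 0")
        case True
        then show ?thesis using DERIV_pos_inc_right[OF du[OF z1] True] u1 by (metis less_irrefl)
      next
        case False
        then have "u' z1 < 0" using \<open>u' z1 \<noteq> 0\<close> by simp
        then show ?thesis using DERIV_neg_dec_right[OF du[OF z1]] u1 by (metis less_irrefl)
      qed
      then obtain d where d: "d > 0" "\<And>h. h > 0 \<Longrightarrow> h < d \<Longrightarrow> u (z1 + h) \<noteq> 0" by blast
      obtain y where y: "y \<in> Z" "y < zs + d" using approx[OF d(1)] by blast
      have "y > z1" "u y = 0" using y by (auto simp: Z_def)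
      then show False using d(2)[of "y - z1"] y True by auto
    qed
    then show False using no_double_zero[OF z1 u1] by simp
  next
    case False
    then have zz: "z1 < zs" using zs_ge by simp
    have nz_open: "\<forall>x\<in>{z1<..<zs}. u x \<noteq> 0"
    proof
      fix x assume x: "x \<in> {z1<..<zs}"
      show "u x \<noteq> 0"
      proof
        assume "u x = 0"
        then have "x \<in> Z" using x zs_z2 by (auto simp: Z_def)
        then show False using zs_le x by force
      qed
    qed
    define c where "c = (z1 + zs) / 2"
    have c: "c \<in> {z1<..<zs}" using zz by (auto simp: c_def)
    have S: "{z1<..<zs} \<subseteq> {0<..}" "\<And>x y. x \<in> {z1<..<zs} \<Longrightarrow> y \<in> {z1<..<zs} \<Longrightarrow> {x..y} \<subseteq> {z1<..<zs}"
      using z1 by auto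
    have close': "zs - z1 < pi / sqrt M" using close zs_z2 by simp
    have qM': "\<forall>x\<in>{z1..zs}. q x \<le> M" using qM zs_z2 by auto
    have "u c \<noteq> 0" using nz_open c by blast
    then consider "u c > 0" | "- u c > 0" by linarith
    then show False
    proof cases
      case 1
      then have "\<forall>x\<in>{z1<..<zs}. u x > 0" using nz_pos[OF S nz_open c] by blast
      then show False using sep_core[OF z1 zz u1 uzs M close' qM'] by blast
    next
      case 2
      have "\<forall>x\<in>{z1<..<zs}. - u x > 0"
        using sturm.nz_pos[OF neg S _ c 2] nz_open by auto
      then show False using sturm.sep_core[OF neg z1 zz _ _ M close' qM'] u1 uzs by auto
    qed
  qed
qed

lemma count_upper:
  assumes A: "A > 0" and AB: "A \<le> B" and M: "M > 0" and qM: "\<forall>x\<in>{A..B}. q x \<le> M"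
  shows "finite {x\<in>{A..B}. u x = 0} \<and> real (card {x\<in>{A..B}. u x = 0}) \<le> (B - A) * sqrt M / pi + 1"
proof -
  define d where "d = pi / sqrt M"
  have d: "d > 0" using M by (simp add: d_def)
  define Z where "Z = {x\<in>{A..B}. u x = 0}"
  define f where "f x = nat \<lfloor>(x - A) / d\<rfloor>" for x
  define K where "K = nat \<lfloor>(B - A) / d\<rfloor>"
  have fZ: "f ` Z \<subseteq> {0..K}"
  proof
    fix y assume "y \<in> f ` Z"
    then obtain x where x: "x \<in> Z" "y = f x" by blast
    have "(x - A) / d \<le> (B - A) / d" using x d by (auto simp: Z_def divide_right_mono)
    then have "\<lfloor>(x - A) / d\<rfloor> \<le> \<lfloor>(B - A) / d\<rfloor>" by (rule floor_mono)
    then show "y \<in> {0..K}" using x by (auto simp: f_def K_def)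
  qed
  have lt: "f x \<noteq> f y" if xy: "x \<in> Z" "y \<in> Z" "x < y" for x y
  proof -
    have "y - x \<ge> d" unfolding d_def
      by (rule separation) (use xy A qM M in \<open>auto simp: Z_def\<close>)
    then have "(y - x) / d \<ge> 1" using d by (simp add: le_divide_eq)
    moreover have "(y - A) / d = (x - A) / d + (y - x) / d" by (simp add: diff_divide_distrib)
    ultimately have "(y - A) / d \<ge> (x - A) / d + 1" by linarith
    then have "\<lfloor>(y - A) / d\<rfloor> \<ge> \<lfloor>(x - A) / d\<rfloor> + 1"
      by (metis floor_add_int floor_mono of_int_1)
    moreover have "\<lfloor>(x - A) / d\<rfloor> \<ge> 0" using xy d by (auto simp: Z_def)
    moreover have "\<lfloor>(y - A) / d\<rfloor> \<ge> 0" using xy d by (auto simp: Z_def)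
    ultimately have ix: "int (f x) = \<lfloor>(x - A) / d\<rfloor>" and iy: "int (f y) = \<lfloor>(y - A) / d\<rfloor>"
      and lt1: "\<lfloor>(x - A) / d\<rfloor> < \<lfloor>(y - A) / d\<rfloor>" by (simp_all add: f_def)
    show ?thesis
    proof
      assume "f x = f y"
      then have "\<lfloor>(x - A) / d\<rfloor> = \<lfloor>(y - A) / d\<rfloor>" using ix iy by simp
      then show False using lt1 by simp
    qed
  qed
  have inj: "inj_on f Z"
  proof (rule inj_onI)
    fix x y assume "x \<in> Z" "y \<in> Z" "f x = f y"
    then show "x = y" using lt[of x y] lt[of y x] by (cases x y rule: linorder_cases) auto
  qed
  have fin: "finite Z" by (rule inj_on_finite[OF inj fZ]) simp
  have "card Z \<le> card {0..K}" by (rule card_inj_on_le[OF inj fZ]) simp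
  then have "real (card Z) \<le> real K + 1" by simp
  also have "real K \<le> (B - A) / d" using AB d by (simp add: K_def)
  then have "real K + 1 \<le> (B - A) * sqrt M / pi + 1" by (simp add: d_def)
  finally show ?thesis using fin by (simp add: Z_def)
qed

lemma count_lower:
  assumes A: "A > 0" and AB: "A \<le> B" and m: "m \<ge> 0" and qm: "\<forall>x\<in>{A..B}. q x \<ge> m"
    and fin: "finite {x\<in>{A<..B}. u x = 0}"
  shows "real (card {x\<in>{A<..B}. u x = 0}) \<ge> (B - A) * sqrt m / pi - 1"
proof (cases "m = 0")
  case True then show ?thesis by simp
next
  case False
  then have m: "m > 0" using m by simp
  define d where "d = pi / sqrt m"
  have d: "d > 0" using m by (simp add: d_def)
  define Z where "Z = {x\<in>{A<..B}. u x = 0}"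
  define n where "n = nat \<lfloor>(B - A) / d\<rfloor>"
  have nle: "real n * d \<le> B - A"
  proof -
    have "real n \<le> (B - A) / d" using AB d by (simp add: n_def)
    then show ?thesis using d by (simp add: pos_le_divide_eq)
  qed
  have "\<forall>j. \<exists>z. j < n \<longrightarrow> A + real j * d < z \<and> z \<le> A + real j * d + d \<and> u z = 0"
  proof (intro allI)
    fix j
    show "\<exists>z. j < n \<longrightarrow> A + real j * d < z \<and> z \<le> A + real j * d + d \<and> u z = 0"
    proof (cases "j < n")
      case True
      have "real (Suc j) \<le> real n" using True by simp
      then have "real (Suc j) * d \<le> real n * d" using d by (intro mult_right_mono) auto
      then have jB: "A + real j * d + d \<le> B" using nle by (simp add: algebra_simps)
      have jd: "real j * d \<ge> 0" using d by simp
      have "\<exists>z. A + real j * d < z \<and> z \<le> A + real j * d + pi / sqrt m \<and> u z = 0"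
      proof (rule sturm_lower)
        show "A + real j * d > 0" using A jd by simp
        show "m > 0" by (rule m)
        show "\<forall>x\<in>{A + real j * d..A + real j * d + pi / sqrt m}. m \<le> q x"
        proof
          fix x assume "x \<in> {A + real j * d..A + real j * d + pi / sqrt m}"
          then have "x \<in> {A..B}" using jd jB unfolding d_def by auto
          then show "m \<le> q x" using qm by blast
        qed
      qed
      then show ?thesis by (auto simp: d_def)
    qed simp
  qed
  then obtain g where g: "\<And>j. j < n \<Longrightarrow> A + real j * d < g j \<and> g j \<le> A + real j * d + d \<and> u (g j) = 0"
    by metis
  have gZ: "g ` {..<n} \<subseteq> Z"
  proof
    fix y assume "y \<in> g ` {..<n}"
    then obtain j where j: "j < n" "y = g j" by blast
    have "real (Suc j) \<le> real n" using j by simp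
    then have "real (Suc j) * d \<le> real n * d" using d by (intro mult_right_mono) auto
    then have "A + real j * d + d \<le> B" using nle by (simp add: algebra_simps)
    then show "y \<in> Z" using g[OF j(1)] j d A by (auto simp: Z_def intro: order_trans)
      (smt (verit) mult_nonneg_nonneg of_nat_0_le_iff)
  qed
  have glt: "g i < g j" if "i < j" "j < n" for i j
  proof -
    have "real (Suc i) \<le> real j" using that by simp
    then have "real (Suc i) * d \<le> real j * d" using d by (intro mult_right_mono) auto
    then show ?thesis using g[of i] g[of j] that by (simp add: algebra_simps)
  qed
  have inj: "inj_on g {..<n}"
  proof (rule inj_onI)
    fix i j assume "i \<in> {..<n}" "j \<in> {..<n}" "g i = g j"
    then show "i = j" using glt[of i j] glt[of j i] by (cases i j rule: linorder_cases) auto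
  qed
  have "card {..<n} \<le> card Z" by (rule card_inj_on_le[OF inj gZ]) (use fin in \<open>simp add: Z_def\<close>)
  then have "real n \<le> real (card Z)" by simp
  moreover have "(B - A) / d - 1 \<le> real n" using AB d by (simp add: n_def)
  ultimately show ?thesis by (simp add: Z_def d_def)
qed

end



definition FF :: "real \<Rightarrow> real" where "FF h = sqrt (h^2 - 1) - arcsec h"
definition ff :: "real \<Rightarrow> real" where "ff t = sqrt (1 - 1 / t^2)"

lemma FF_1: "FF 1 = 0" by (simp add: FF_def arcsec_def)

lemma FF_cont: "continuous_on {1..} FF"
  unfolding FF_def[abs_def] arcsec_def
  by (intro continuous_intros) (auto simp: divide_simps)

lemma sqrt_1_minus: assumes "h > 1" shows "sqrt (1 - 1 / h^2) = sqrt (h^2 - 1) / h"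
proof -
  have "1 - 1 / h^2 = (h^2 - 1) / h^2" using assms by (simp add: field_simps)
  then show ?thesis using assms by (simp add: real_sqrt_divide)
qed

lemma FF_deriv:
  assumes h: "h > 1"
  shows "(FF has_real_derivative ff h) (at h)"
proof -
  define r where "r = sqrt (h^2 - 1)"
  have h2: "h^2 > 1" using one_less_power[OF h, of 2] by simp
  have r: "r > 0" "r^2 = h^2 - 1" using h2 by (auto simp: r_def)
  have d1: "((\<lambda>h. sqrt (h^2 - 1)) has_real_derivative inverse (sqrt (h^2 - 1)) / 2 * (2 * h)) (at h)"
    using h2 by (auto intro!: derivative_eq_intros simp: power2_eq_square)
  have "-1 < 1/h" "1/h < 1" using h by (auto simp: divide_simps)
  then have d2: "((\<lambda>h. arccos (1 / h)) has_real_derivative inverse (- sqrt (1 - (1/h)^2)) * (- 1 / h^2)) (at h)"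
    using h by (auto intro!: derivative_eq_intros DERIV_chain2[OF DERIV_arccos] simp: power2_eq_square divide_simps)
  have e1: "sqrt (1 - (1/h)^2) = r / h" using sqrt_1_minus[OF h] by (simp add: r_def power_divide)
  have "inverse (sqrt (h^2 - 1)) / 2 * (2 * h) - inverse (- sqrt (1 - (1/h)^2)) * (- 1 / h^2) = r / h"
  proof -
    have hh: "h * h = 1 + r * r" using r by (simp add: power2_eq_square)
    have hne: "h \<noteq> 0" using h by simp
    have "inverse r / 2 * (2 * h) - inverse (- (r / h)) * (- 1 / h^2) = h / r - 1 / (r * h)"
      using r hne by (simp add: field_simps power2_eq_square)
    also have "\<dots> = (h * h - 1) / (r * h)" using r hne by (simp add: field_simps)
    also have "\<dots> = (r * r) / (r * h)" using hh by simp
    also have "\<dots> = r / h" using r hne by simp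
    finally show ?thesis unfolding e1 r_def[symmetric] .
  qed
  moreover have "ff h = r / h" using sqrt_1_minus[OF h] by (simp add: ff_def r_def)
  ultimately show ?thesis unfolding FF_def[abs_def] arcsec_def using DERIV_diff[OF d1 d2] by simp
qed

lemma ff_nonneg: "t \<ge> 1 \<Longrightarrow> ff t \<ge> 0"
  by (simp add: ff_def divide_simps)

lemma ff_le1: "t \<ge> 1 \<Longrightarrow> ff t \<le> 1"
  by (simp add: ff_def)

lemma ff_mono: assumes "1 \<le> a" "a \<le> b" shows "ff a \<le> ff b"
proof -
  have "a^2 \<le> b^2" using assms by (intro power_mono) auto
  then have "1 / b^2 \<le> 1 / a^2" using assms by (intro divide_left_mono) auto
  then show ?thesis unfolding ff_def by simp
qed

lemma ff_pos: "t > 1 \<Longrightarrow> ff t > 0"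
proof -
  assume "t > 1"
  then have "t^2 > 1" using one_less_power[of t 2] by simp
  then have "1 / t^2 < 1" by (simp add: divide_less_eq)
  then show ?thesis by (simp add: ff_def)
qed

lemma FF_mvt:
  assumes "1 \<le> a" "a \<le> b"
  shows "(b - a) * ff a \<le> FF b - FF a \<and> FF b - FF a \<le> (b - a) * ff b"
proof (cases "a = b")
  case True then show ?thesis by simp
next
  case False
  then have ab: "a < b" using assms by simp
  have "continuous_on {a..b} FF" using FF_cont by (rule continuous_on_subset) (use assms in auto)
  moreover have "FF differentiable (at x)" if "a < x" "x < b" for x
    using FF_deriv[of x] that assms real_differentiable_def by fastforce
  ultimately obtain l z where z: "a < z" "z < b" "DERIV FF z :> l" "FF b - FF a = (b - a) * l"
    using MVT[OF ab] by blast
  have "l = ff z" using DERIV_unique[OF z(3) FF_deriv[of z]] z assms by simp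
  moreover have "ff a \<le> ff z" "ff z \<le> ff b" using z assms by (auto intro!: ff_mono)
  ultimately show ?thesis using z ab by (auto intro!: mult_left_mono)
qed

lemma FF_strict: assumes "1 \<le> a" "a < b" shows "FF a < FF b"
proof -
  define c where "c = (a + b) / 2"
  have c: "a < c" "c < b" using assms by (auto simp: c_def)
  have "0 < (b - c) * ff c" using c assms by (intro mult_pos_pos ff_pos) auto
  also have "\<dots> \<le> FF b - FF c" using FF_mvt[of c b] c assms by auto
  finally have "FF c < FF b" by simp
  moreover have "FF a \<le> FF c" using FF_mvt[of a c] c assms ff_nonneg[of a]
    by (smt (verit) mult_nonneg_nonneg)
  ultimately show ?thesis by simp
qed

lemma FF_lower: assumes "h \<ge> 1" shows "FF h \<ge> h - 1 - pi"
proof -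
  have "(h - 1)^2 \<le> h^2 - 1" using assms by (simp add: power2_eq_square algebra_simps)
  then have "h - 1 \<le> sqrt (h^2 - 1)" using assms real_le_rsqrt by simp
  moreover have "arcsec h \<le> pi" unfolding arcsec_def using assms
    by (intro arccos_ubound) (auto simp: divide_simps)
  ultimately show ?thesis by (simp add: FF_def)
qed

lemma riemann:
  assumes n: "n > 0" and H: "H \<ge> 1"
  defines "D \<equiv> (H - 1) / real n"
  shows "(\<Sum>i<n. D * ff (1 + real i * D)) \<ge> FF H - D"
    and "(\<Sum>i<n. D * ff (1 + real (Suc i) * D)) \<le> FF H + D"
proof -
  define t where "t i = 1 + real i * D" for i
  have D: "D \<ge> 0" using H n by (simp add: D_def)
  have t0: "t 0 = 1" and tn: "t n = H" using n by (simp_all add: t_def D_def)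
  have tge: "t i \<ge> 1" for i using D by (simp add: t_def)
  have tS: "t (Suc i) = t i + D" for i by (simp add: t_def algebra_simps)
  have pieces: "D * ff (t i) \<le> FF (t (Suc i)) - FF (t i) \<and> FF (t (Suc i)) - FF (t i) \<le> D * ff (t (Suc i))" for i
    using FF_mvt[of "t i" "t (Suc i)"] tge[of i] D by (simp add: tS)
  have tel: "(\<Sum>i<n. FF (t (Suc i)) - FF (t i)) = FF H"
    using sum_lessThan_telescope[of "\<lambda>i. FF (t i)" n] by (simp add: t0 tn FF_1)
  have telf: "(\<Sum>i<n. D * ff (t (Suc i)) - D * ff (t i)) = D * ff H"
    using sum_lessThan_telescope[of "\<lambda>i. D * ff (t i)" n] by (simp add: t0 tn ff_def)
  have L: "(\<Sum>i<n. D * ff (t i)) \<le> FF H"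
    unfolding tel[symmetric] by (rule sum_mono) (use pieces in blast)
  have U: "FF H \<le> (\<Sum>i<n. D * ff (t (Suc i)))"
    unfolding tel[symmetric] by (rule sum_mono) (use pieces in blast)
  have UL: "(\<Sum>i<n. D * ff (t (Suc i))) = (\<Sum>i<n. D * ff (t i)) + D * ff H"
    using telf by (simp add: sum_subtractf)
  have "D * ff H \<le> D" using D ff_le1[OF H] by (simp add: mult_left_le)
  then show "(\<Sum>i<n. D * ff (1 + real i * D)) \<ge> FF H - D"
    and "(\<Sum>i<n. D * ff (1 + real (Suc i) * D)) \<le> FF H + D"
    using L U UL by (simp_all add: t_def)
qed




lemma interp: assumes "\<nu> \<ge> 0" shows "sturm (W0 \<nu>) (W1 \<nu>) (Wq \<nu>)"
proof
  fix x :: real assume x: "x > 0"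
  show "(W0 \<nu> has_real_derivative W1 \<nu> x) (at x)" by (rule W0_deriv[OF assms x])
  show "(W1 \<nu> has_real_derivative - Wq \<nu> x * W0 \<nu> x) (at x)" by (rule W1_deriv[OF assms x])
next
  show "continuous_on {0<..} (Wq \<nu>)" unfolding Wq_def[abs_def]
    by (intro continuous_intros) auto
next
  fix z :: real assume z: "z > 0"
  obtain e where e: "e > 0" "\<And>x. 0 < x \<and> x \<le> e \<longrightarrow> W0 \<nu> x > 0" using W0_pos_near0[OF assms] by blast
  show "\<exists>e. 0 < e \<and> e < z \<and> W0 \<nu> e \<noteq> 0"
    using e(1) z e(2)[of "min e (z/2)"] by (intro exI[of _ "min e (z/2)"]) auto
qed

lemma Wq_le1: "\<nu> \<ge> 1 \<Longrightarrow> Wq \<nu> x \<le> 1"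
proof -
  assume "\<nu> \<ge> 1"
  then have "\<nu>^2 \<ge> 1" by (simp add: one_le_power)
  then have "(\<nu>^2 - 1/4) / x^2 \<ge> 0" by simp
  then show ?thesis by (simp add: Wq_def)
qed

definition ZS :: "real \<Rightarrow> (real \<Rightarrow> bool) \<Rightarrow> real set" where
  "ZS \<nu> P = {y. 0 < y \<and> P y \<and> bessel_J \<nu> y = 0}"

lemma ZS_W0: "\<nu> \<ge> 0 \<Longrightarrow> ZS \<nu> P = {y. 0 < y \<and> P y \<and> W0 \<nu> y = 0}"
  unfolding ZS_def using J_zero_iff by blast

lemma zeros_finite:
  assumes nu: "\<nu> \<ge> 1"
  shows "finite {y. 0 < y \<and> y \<le> X \<and> bessel_J \<nu> y = 0}"
proof -
  interpret S: sturm "W0 \<nu>" "W1 \<nu>" "Wq \<nu>" by (rule interp) (use nu in simp)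
  obtain e where e: "e > 0" "\<And>x. 0 < x \<and> x \<le> e \<longrightarrow> W0 \<nu> x > 0"
    using W0_pos_near0[of \<nu>] nu by auto
  have "finite {x\<in>{e..max e X}. W0 \<nu> x = 0}"
    using S.count_upper[of e "max e X" 1] e Wq_le1[OF nu] by auto
  moreover have "{y. 0 < y \<and> y \<le> X \<and> bessel_J \<nu> y = 0} \<subseteq> {x\<in>{e..max e X}. W0 \<nu> x = 0}"
  proof
    fix y assume y: "y \<in> {y. 0 < y \<and> y \<le> X \<and> bessel_J \<nu> y = 0}"
    then have w: "W0 \<nu> y = 0" using J_zero_iff[of \<nu> y] nu by auto
    then have "\<not> y \<le> e" using e(2)[of y] y by auto
    then show "y \<in> {x\<in>{e..max e X}. W0 \<nu> x = 0}" using y w by auto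
  qed
  ultimately show ?thesis by (rule finite_subset[rotated])
qed

lemma zeros_finite_lt:
  "\<nu> \<ge> 1 \<Longrightarrow> finite {y. 0 < y \<and> y < X \<and> bessel_J \<nu> y = 0}"
  by (rule finite_subset[OF _ zeros_finite[of \<nu> X]]) auto

lemma zeros_unbounded:
  assumes nu: "\<nu> \<ge> 1"
  shows "\<exists>z. z > X \<and> bessel_J \<nu> z = 0"
proof -
  interpret S: sturm "W0 \<nu>" "W1 \<nu>" "Wq \<nu>" by (rule interp) (use nu in simp)
  define a where "a = max X (2 * \<nu>)"
  have a: "a > 0" "a \<ge> X" "a \<ge> 2 * \<nu>" using nu by (auto simp: a_def)
  have "\<forall>x\<in>{a..a + pi / sqrt (1/2)}. Wq \<nu> x \<ge> 1/2"
  proof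
    fix x assume x: "x \<in> {a..a + pi / sqrt (1/2)}"
    have x2: "x \<ge> 2 * \<nu>" "x > 0" using x a by auto
    have "(2 * \<nu>)^2 \<le> x^2" using x2 nu by (intro power_mono) auto
    then have "4 * \<nu>^2 \<le> x^2" by (simp add: power_mult_distrib)
    then have "\<nu>^2 / x^2 \<le> 1/4" using x2 by (simp add: divide_simps)
    moreover have "(\<nu>^2 - 1/4) / x^2 \<le> \<nu>^2 / x^2" using x2 by (simp add: divide_right_mono)
    ultimately show "Wq \<nu> x \<ge> 1/2" unfolding Wq_def by linarith
  qed
  then obtain z where z: "a < z" "W0 \<nu> z = 0" using S.sturm_lower[of a "1/2"] a by auto
  then show ?thesis using J_zero_iff[of \<nu> z] nu a by (intro exI[of _ z]) auto
qed

definition kth :: "real \<Rightarrow> nat \<Rightarrow> real \<Rightarrow> bool" where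
  "kth \<nu> k x \<longleftrightarrow> 0 < x \<and> bessel_J \<nu> x = 0 \<and>
      finite {y. 0 < y \<and> y < x \<and> bessel_J \<nu> y = 0} \<and>
      card {y. 0 < y \<and> y < x \<and> bessel_J \<nu> y = 0} = k - 1"

lemma kth_exists:
  assumes nu: "\<nu> \<ge> 1"
  shows "\<exists>x. kth \<nu> (Suc k) x"
proof (induction k)
  case 0
  obtain X where X: "X > 0" "bessel_J \<nu> X = 0" using zeros_unbounded[OF nu, of 0] by auto
  define S where "S = {y. 0 < y \<and> y \<le> X \<and> bessel_J \<nu> y = 0}"
  have S: "finite S" "S \<noteq> {}" using zeros_finite[OF nu, of X] X by (auto simp: S_def)
  define x where "x = Min S"
  have xS: "x \<in> S" using S by (simp add: x_def)
  have emp: "{y. 0 < y \<and> y < x \<and> bessel_J \<nu> y = 0} = {}"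
  proof (rule ccontr)
    assume "{y. 0 < y \<and> y < x \<and> bessel_J \<nu> y = 0} \<noteq> {}"
    then obtain y where y: "0 < y" "y < x" "bessel_J \<nu> y = 0" by auto
    then have "y \<in> S" using xS by (auto simp: S_def)
    then have "x \<le> y" using S by (simp add: x_def)
    then show False using y by simp
  qed
  have "kth \<nu> (Suc 0) x" unfolding kth_def emp using xS by (simp add: S_def)
  then show ?case by blast
next
  case (Suc k)
  then obtain x where x: "kth \<nu> (Suc k) x" by blast
  obtain X where X: "X > x" "bessel_J \<nu> X = 0" using zeros_unbounded[OF nu, of x] by auto
  define S where "S = {y. x < y \<and> y \<le> X \<and> bessel_J \<nu> y = 0}"
  have "S \<subseteq> {y. 0 < y \<and> y \<le> X \<and> bessel_J \<nu> y = 0}" using x by (auto simp: S_def kth_def)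
  then have S: "finite S" "S \<noteq> {}" using zeros_finite[OF nu, of X] X finite_subset by (auto simp: S_def)
  define x' where "x' = Min S"
  have xS: "x' \<in> S" using S by (simp add: x'_def)
  have eq: "{y. 0 < y \<and> y < x' \<and> bessel_J \<nu> y = 0} = insert x {y. 0 < y \<and> y < x \<and> bessel_J \<nu> y = 0}"
  proof (rule set_eqI, rule iffI)
    fix y assume y: "y \<in> {y. 0 < y \<and> y < x' \<and> bessel_J \<nu> y = 0}"
    show "y \<in> insert x {y. 0 < y \<and> y < x \<and> bessel_J \<nu> y = 0}"
    proof (cases "x < y")
      case True
      then have "y \<in> S" using y xS by (auto simp: S_def)
      then have "x' \<le> y" using S by (simp add: x'_def)
      then show ?thesis using y by simp
    qed (use y in auto)
  next
    fix y assume "y \<in> insert x {y. 0 < y \<and> y < x \<and> bessel_J \<nu> y = 0}"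
    then show "y \<in> {y. 0 < y \<and> y < x' \<and> bessel_J \<nu> y = 0}" using x xS by (auto simp: kth_def S_def)
  qed
  have nin: "x \<notin> {y. 0 < y \<and> y < x \<and> bessel_J \<nu> y = 0}" by simp
  have fin: "finite {y. 0 < y \<and> y < x \<and> bessel_J \<nu> y = 0}"
    and cx: "card {y. 0 < y \<and> y < x \<and> bessel_J \<nu> y = 0} = k" using x by (auto simp: kth_def)
  have "kth \<nu> (Suc (Suc k)) x'" unfolding kth_def eq using x xS fin nin cx by (auto simp: S_def kth_def)
  then show ?case by blast
qed

lemma kth_unique:
  assumes "kth \<nu> k x1" "kth \<nu> k x2" shows "x1 = x2"
proof (rule ccontr)
  assume ne: "x1 \<noteq> x2"
  have *: False if a: "kth \<nu> k a" "kth \<nu> k b" "a < b" for a b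
  proof -
    define A where "A = {y. 0 < y \<and> y < a \<and> bessel_J \<nu> y = 0}"
    define B where "B = {y. 0 < y \<and> y < b \<and> bessel_J \<nu> y = 0}"
    have sub: "insert a A \<subseteq> B" using a by (auto simp: kth_def A_def B_def)
    have fA: "finite A" "card A = k - 1" "a \<notin> A" using a(1) by (auto simp: kth_def A_def)
    have fB: "finite B" "card B = k - 1" using a(2) by (auto simp: kth_def B_def)
    have "card (insert a A) = Suc (k - 1)" using fA by simp
    moreover have "card (insert a A) \<le> card B" by (rule card_mono[OF fB(1) sub])
    ultimately show False using fB by simp
  qed
  show False using ne *[of x1 x2] *[of x2 x1] assms by (cases "x1 < x2") auto
qed




lemma Wq_mono:
  assumes nu: "\<nu> \<ge> 1" and xy: "0 < x" "x \<le> y"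
  shows "Wq \<nu> x \<le> Wq \<nu> y"
proof -
  have "\<nu>^2 \<ge> 1" using nu by (simp add: one_le_power)
  then have c: "\<nu>^2 - 1/4 \<ge> 0" by linarith
  have "x^2 \<le> y^2" using xy by (intro power_mono) auto
  then have "(\<nu>^2 - 1/4) / y^2 \<le> (\<nu>^2 - 1/4) / x^2" using c xy by (intro divide_left_mono) auto
  then show ?thesis by (simp add: Wq_def)
qed

lemma Wq_at:
  assumes "\<nu> > 0" "T > 0"
  shows "Wq \<nu> (\<nu> * T) = (1 - 1 / T^2) + 1 / (4 * \<nu>^2 * T^2)"
  using assms by (simp add: Wq_def field_simps power_mult_distrib)

lemma ff_sq: "T \<ge> 1 \<Longrightarrow> (ff T)^2 = 1 - 1 / T^2"
proof -
  assume T: "T \<ge> 1"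
  have "T^2 \<ge> 1" using T by (simp add: one_le_power)
  then have "1 / T^2 \<le> 1" by (auto simp: divide_simps)
  then show ?thesis by (simp add: ff_def)
qed

lemma lowerN:
  assumes nu: "\<nu> \<ge> 1" and H: "H > 1" and n: "n > 0"
  defines "D \<equiv> (H - 1) / real n"
  shows "real (card {y. 0 < y \<and> y < \<nu> * H \<and> bessel_J \<nu> y = 0})
     \<ge> \<nu> / pi * (\<Sum>i<n. D * ff (1 + real i * D)) - real n - 1"
proof -
  interpret S: sturm "W0 \<nu>" "W1 \<nu>" "Wq \<nu>" by (rule interp) (use nu in simp)
  define t where "t i = 1 + real i * D" for i
  have D: "D > 0" using H n by (simp add: D_def)
  have tge: "t i \<ge> 1" for i using D by (simp add: t_def)
  have tS: "t (Suc i) = t i + D" for i by (simp add: t_def algebra_simps)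
  have tmono: "i \<le> j \<Longrightarrow> t i \<le> t j" for i j using D by (simp add: t_def mult_right_mono)
  have tn: "t n = H" using n by (simp add: t_def D_def)
  define Z where "Z = {y. 0 < y \<and> y < \<nu> * H \<and> bessel_J \<nu> y = 0}"
  define Z' where "Z' = {y. 0 < y \<and> y \<le> \<nu> * H \<and> bessel_J \<nu> y = 0}"
  define P where "P i = {x\<in>{\<nu> * t i<..\<nu> * t (Suc i)}. W0 \<nu> x = 0}" for i
  have finZ': "finite Z'" unfolding Z'_def by (rule zeros_finite[OF nu])
  have Z'Z: "Z' \<subseteq> insert (\<nu> * H) Z" by (auto simp: Z_def Z'_def)
  have finZ: "finite Z" using finZ' by (simp add: Z_def Z'_def finite_subset[of _ Z'] subset_eq)
  have cZ: "card Z' \<le> card Z + 1"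
    using card_mono[OF _ Z'Z] finZ card_insert_le_m1 by (simp add: card_insert_if split: if_splits)
  have PZ': "P i \<subseteq> Z'" if "i < n" for i
  proof
    fix x assume x: "x \<in> P i"
    have "t (Suc i) \<le> t n" using that by (intro tmono) simp
    then have b1: "\<nu> * t (Suc i) \<le> \<nu> * H" using nu tn by (simp add: mult_left_mono)
    have b2: "\<nu> * t i > 0" using nu tge[of i] by simp
    have "x \<le> \<nu> * H" "x > 0" using x b1 b2 by (auto simp: P_def)
    then show "x \<in> Z'" using x J_zero_iff[of \<nu> x] nu by (auto simp: P_def Z'_def)
  qed
  have finP: "finite (P i)" if "i < n" for i using PZ'[OF that] finZ' finite_subset by blast
  have disj: "P i \<inter> P j = {}" if "i < j" for i j
  proof -
    have "t (Suc i) \<le> t j" using that by (intro tmono) simp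
    then have "\<nu> * t (Suc i) \<le> \<nu> * t j" using nu by (simp add: mult_left_mono)
    then show ?thesis by (auto simp: P_def)
  qed
  have cardU: "card (\<Union>i\<in>{..<n}. P i) = (\<Sum>i<n. card (P i))"
  proof (rule card_UN_disjoint)
    show "\<forall>i\<in>{..<n}. \<forall>j\<in>{..<n}. i \<noteq> j \<longrightarrow> P i \<inter> P j = {}"
      using disj by (metis Int_commute linorder_neqE_nat)
  qed (use finP in auto)
  have UZ': "(\<Union>i\<in>{..<n}. P i) \<subseteq> Z'" using PZ' by auto
  have cU: "card (\<Union>i\<in>{..<n}. P i) \<le> card Z'" by (rule card_mono[OF finZ' UZ'])
  have each: "real (card (P i)) \<ge> \<nu> / pi * (D * ff (t i)) - 1" if "i < n" for i
  proof -
    have A: "\<nu> * t i > 0" using nu tge[of i] by simp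
    have AB: "\<nu> * t i \<le> \<nu> * t (Suc i)" using nu D by (simp add: tS)
    have qm: "\<forall>x\<in>{\<nu> * t i..\<nu> * t (Suc i)}. Wq \<nu> x \<ge> (ff (t i))^2"
    proof
      fix x assume x: "x \<in> {\<nu> * t i..\<nu> * t (Suc i)}"
      have x0: "x > 0" using x A by auto
      have "(\<nu> * t i)^2 \<le> x^2" using x A by (intro power_mono) auto
      moreover have "0 < x^2 * (\<nu> * t i)^2" using A x0 nu tge[of i] by (intro mult_pos_pos zero_less_power) auto
      ultimately have "\<nu>^2 / x^2 \<le> \<nu>^2 / (\<nu> * t i)^2" by (intro divide_left_mono) auto
      also have "\<dots> = 1 / (t i)^2" using nu by (simp add: power_mult_distrib)
      finally have "\<nu>^2 / x^2 \<le> 1 / (t i)^2" .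
      moreover have "(\<nu>^2 - 1/4) / x^2 \<le> \<nu>^2 / x^2" using x0 by (simp add: divide_right_mono)
      ultimately show "Wq \<nu> x \<ge> (ff (t i))^2" unfolding Wq_def ff_sq[OF tge] by linarith
    qed
    have finPi: "finite {x\<in>{\<nu> * t i<..\<nu> * t (Suc i)}. W0 \<nu> x = 0}" using finP[OF that] by (simp add: P_def)
    have "real (card (P i)) \<ge> (\<nu> * t (Suc i) - \<nu> * t i) * sqrt ((ff (t i))^2) / pi - 1"
      unfolding P_def by (rule S.count_lower[OF A AB _ qm finPi]) simp
    moreover have "sqrt ((ff (t i))^2) = ff (t i)" using ff_nonneg[OF tge] by simp
    moreover have "\<nu> * t (Suc i) - \<nu> * t i = \<nu> * D" by (simp add: tS algebra_simps)
    ultimately show ?thesis by (simp add: field_simps)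
  qed
  have "(\<Sum>i<n. \<nu> / pi * (D * ff (t i)) - 1) \<le> (\<Sum>i<n. real (card (P i)))"
    by (rule sum_mono) (use each in auto)
  also have "\<dots> = real (card (\<Union>i\<in>{..<n}. P i))" using cardU by simp
  also have "\<dots> \<le> real (card Z) + 1" using cU cZ by linarith
  finally have "\<nu> / pi * (\<Sum>i<n. D * ff (t i)) - real n \<le> real (card Z) + 1"
    by (simp add: sum_subtractf sum_distrib_left)
  then show ?thesis by (simp add: Z_def t_def)
qed

lemma sqrt_Mi:
  assumes nu: "\<nu> \<ge> 1" and T: "T \<ge> 1"
  shows "Wq \<nu> (\<nu> * T) > 0" "sqrt (Wq \<nu> (\<nu> * T)) \<le> ff T + 1 / (2 * \<nu>)"
proof -
  have e: "Wq \<nu> (\<nu> * T) = (ff T)^2 + 1 / (4 * \<nu>^2 * T^2)"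
    using Wq_at[of \<nu> T] nu T ff_sq[OF T] by simp
  have p: "1 / (4 * \<nu>^2 * T^2) > 0" using nu T by simp
  show "Wq \<nu> (\<nu> * T) > 0" unfolding e using p by (simp add: add_nonneg_pos)
  have "T^2 \<ge> 1" using T by (simp add: one_le_power)
  then have "4 * \<nu>^2 * T^2 \<ge> 4 * \<nu>^2 * 1" using nu by (intro mult_left_mono) auto
  moreover have "0 < (4 * \<nu>^2 * T^2) * (4 * \<nu>^2 * 1)" using nu T by (intro mult_pos_pos) auto
  ultimately have "1 / (4 * \<nu>^2 * T^2) \<le> 1 / (4 * \<nu>^2 * 1)" by (intro divide_left_mono) auto
  also have "\<dots> = (1 / (2 * \<nu>))^2" by (simp add: power_divide power_mult_distrib)
  finally have "Wq \<nu> (\<nu> * T) \<le> (ff T)^2 + (1 / (2 * \<nu>))^2" unfolding e by simp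
  also have "\<dots> \<le> (ff T + 1 / (2 * \<nu>))^2"
    using ff_nonneg[OF T] nu by (simp add: power2_sum)
  finally have "sqrt (Wq \<nu> (\<nu> * T)) \<le> sqrt ((ff T + 1 / (2 * \<nu>))^2)" by (rule real_sqrt_le_mono)
  also have "\<dots> = ff T + 1 / (2 * \<nu>)" using ff_nonneg[OF T] nu by simp
  finally show "sqrt (Wq \<nu> (\<nu> * T)) \<le> ff T + 1 / (2 * \<nu>)" .
qed

lemma upperN:
  assumes nu: "\<nu> \<ge> 1" and H: "H > 1" and n: "n > 0"
  defines "D \<equiv> (H - 1) / real n"
  shows "real (card {y. 0 < y \<and> y < \<nu> * H \<and> bessel_J \<nu> y = 0})
     \<le> 2 + \<nu> / pi * (\<Sum>i<n. D * ff (1 + real (Suc i) * D)) + (H - 1) / (2 * pi) + real n"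
proof -
  interpret S: sturm "W0 \<nu>" "W1 \<nu>" "Wq \<nu>" by (rule interp) (use nu in simp)
  obtain e where e: "e > 0" "\<And>x. 0 < x \<and> x \<le> e \<longrightarrow> W0 \<nu> x > 0"
    using W0_pos_near0[of \<nu>] nu by auto
  define e0 where "e0 = min e \<nu>"
  have e0: "e0 > 0" "e0 \<le> \<nu>" "e0 \<le> e" using e nu by (auto simp: e0_def)
  define t where "t i = 1 + real i * D" for i
  have D: "D > 0" using H n by (simp add: D_def)
  have tge: "t i \<ge> 1" for i using D by (simp add: t_def)
  have tS: "t (Suc i) = t i + D" for i by (simp add: t_def algebra_simps)
  have tn: "t n = H" using n by (simp add: t_def D_def)
  define Z where "Z = {y. 0 < y \<and> y < \<nu> * H \<and> bessel_J \<nu> y = 0}"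
  define Q0 where "Q0 = {x\<in>{e0..\<nu>}. W0 \<nu> x = 0}"
  define Q where "Q i = {x\<in>{\<nu> * t i..\<nu> * t (Suc i)}. W0 \<nu> x = 0}" for i
  have c2: "\<nu>^2 - 1/4 > 0"
  proof -
    have "\<nu>^2 \<ge> 1" using nu by (simp add: one_le_power)
    then show ?thesis by linarith
  qed
  have Q0b: "finite Q0 \<and> real (card Q0) \<le> (\<nu> - e0) * sqrt (1 / (4 * \<nu>^2)) / pi + 1"
    unfolding Q0_def
  proof (rule S.count_upper[OF e0(1) e0(2)])
    show "1 / (4 * \<nu>^2) > 0" using nu by simp
    show "\<forall>x\<in>{e0..\<nu>}. Wq \<nu> x \<le> 1 / (4 * \<nu>^2)"
    proof
      fix x assume x: "x \<in> {e0..\<nu>}"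
      then have "x > 0" using e0 by auto
      then have "Wq \<nu> x \<le> Wq \<nu> \<nu>" using Wq_mono[OF nu] x by auto
      also have "Wq \<nu> \<nu> = 1 / (4 * \<nu>^2)" using nu by (simp add: Wq_def field_simps)
      finally show "Wq \<nu> x \<le> 1 / (4 * \<nu>^2)" .
    qed
  qed
  have cQ0: "real (card Q0) \<le> 2"
  proof -
    have "sqrt (1 / (4 * \<nu>^2)) = 1 / (2 * \<nu>)" using nu
      by (simp add: real_sqrt_divide real_sqrt_mult)
    then have "(\<nu> - e0) * sqrt (1 / (4 * \<nu>^2)) = (\<nu> - e0) / (2 * \<nu>)" by simp
    also have "\<dots> \<le> 1" using e0 nu by (simp add: divide_simps)
    finally have "(\<nu> - e0) * sqrt (1 / (4 * \<nu>^2)) / pi \<le> 1 / pi" by (simp add: divide_right_mono)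
    also have "1 / pi \<le> 1" using pi_gt3 by simp
    finally show ?thesis using Q0b by linarith
  qed
  have Qb: "finite (Q i) \<and> real (card (Q i)) \<le> \<nu> / pi * (D * ff (t (Suc i))) + D / (2 * pi) + 1" for i
  proof -
    have A: "\<nu> * t i > 0" using nu tge[of i] by simp
    have AB: "\<nu> * t i \<le> \<nu> * t (Suc i)" using nu D by (simp add: tS)
    have M: "Wq \<nu> (\<nu> * t (Suc i)) > 0" "sqrt (Wq \<nu> (\<nu> * t (Suc i))) \<le> ff (t (Suc i)) + 1 / (2 * \<nu>)"
      using sqrt_Mi[OF nu tge] by auto
    have qM: "\<forall>x\<in>{\<nu> * t i..\<nu> * t (Suc i)}. Wq \<nu> x \<le> Wq \<nu> (\<nu> * t (Suc i))"
      using Wq_mono[OF nu] A by auto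
    have "finite (Q i) \<and> real (card (Q i)) \<le> (\<nu> * t (Suc i) - \<nu> * t i) * sqrt (Wq \<nu> (\<nu> * t (Suc i))) / pi + 1"
      unfolding Q_def by (rule S.count_upper[OF A AB M(1) qM])
    moreover have "\<nu> * t (Suc i) - \<nu> * t i = \<nu> * D" by (simp add: tS algebra_simps)
    moreover have "(\<nu> * D) * sqrt (Wq \<nu> (\<nu> * t (Suc i))) \<le> (\<nu> * D) * (ff (t (Suc i)) + 1 / (2 * \<nu>))"
      using M(2) nu D by (intro mult_left_mono) auto
    moreover have "(\<nu> * D) * (ff (t (Suc i)) + 1 / (2 * \<nu>)) / pi = \<nu> / pi * (D * ff (t (Suc i))) + D / (2 * pi)"
      using nu by (simp add: field_simps)
    ultimately show ?thesis by (smt (verit) divide_right_mono pi_gt_zero)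
  qed
  have ZQ: "Z \<subseteq> Q0 \<union> (\<Union>i\<in>{..<n}. Q i)"
  proof
    fix y assume y: "y \<in> Z"
    then have y0: "0 < y" "y < \<nu> * H" and w: "W0 \<nu> y = 0" using J_zero_iff[of \<nu> y] nu by (auto simp: Z_def)
    have ye: "y > e" using e(2)[of y] y0 w by force
    show "y \<in> Q0 \<union> (\<Union>i\<in>{..<n}. Q i)"
    proof (cases "y \<le> \<nu>")
      case True then show ?thesis using ye e0 w by (auto simp: Q0_def)
    next
      case False
      define s where "s = (y / \<nu> - 1) / D"
      have s0: "s > 0" using False nu D by (simp add: s_def field_simps)
      have "y / \<nu> < H" using y0 nu by (simp add: divide_simps mult.commute)
      then have "(y / \<nu> - 1) / D < (H - 1) / D" using D by (intro divide_strict_right_mono) auto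
      moreover have "(H - 1) / D = real n" using n H by (simp add: D_def)
      ultimately have sn: "s < real n" by (simp add: s_def)
      define i where "i = nat \<lfloor>s\<rfloor>"
      have i1: "real i \<le> s" "s < real i + 1" using s0 by (simp_all add: i_def)
      have "i < n" using i1 sn by linarith
      moreover have "t i \<le> y / \<nu>" using i1 D by (simp add: t_def s_def field_simps)
      moreover have "y / \<nu> \<le> t (Suc i)" using i1 D by (simp add: t_def s_def field_simps)
      ultimately have "y \<in> Q i" using nu w by (auto simp: Q_def field_simps)
      then show ?thesis using \<open>i < n\<close> by auto
    qed
  qed
  have finU: "finite (\<Union>i\<in>{..<n}. Q i)" using Qb by auto
  have "card Z \<le> card (Q0 \<union> (\<Union>i\<in>{..<n}. Q i))" by (rule card_mono) (use Q0b finU ZQ in auto)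
  also have "\<dots> \<le> card Q0 + card (\<Union>i\<in>{..<n}. Q i)" by (rule card_Un_le)
  also have "card (\<Union>i\<in>{..<n}. Q i) \<le> (\<Sum>i<n. card (Q i))" by (rule card_UN_le) simp
  finally have "real (card Z) \<le> real (card Q0) + (\<Sum>i<n. real (card (Q i)))"
    by (metis add_le_cancel_left of_nat_add of_nat_le_iff of_nat_sum)
  also have "(\<Sum>i<n. real (card (Q i))) \<le> (\<Sum>i<n. \<nu> / pi * (D * ff (t (Suc i))) + D / (2 * pi) + 1)"
    by (rule sum_mono) (use Qb in auto)
  also have "\<dots> = \<nu> / pi * (\<Sum>i<n. D * ff (t (Suc i))) + real n * D / (2 * pi) + real n"
    by (simp add: sum.distrib sum_distrib_left)
  also have "real n * D = H - 1" using n by (simp add: D_def)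
  finally show ?thesis using cQ0 by (simp add: Z_def t_def)
qed




lemma asym_lower:
  assumes H: "H > 1" and eps: "\<epsilon> > 0"
  shows "\<exists>V. \<forall>\<nu>\<ge>V. real (card {y. 0 < y \<and> y < \<nu> * H \<and> bessel_J \<nu> y = 0}) \<ge> \<nu> * (FF H / pi - \<epsilon>)"
proof -
  define n where "n = nat \<lceil>2 * (H - 1) / (pi * \<epsilon>)\<rceil> + 1"
  have n: "n > 0" by (simp add: n_def)
  define D where "D = (H - 1) / real n"
  have "real n \<ge> 2 * (H - 1) / (pi * \<epsilon>)" unfolding n_def by linarith
  then have "2 * (H - 1) \<le> real n * (pi * \<epsilon>)" using eps by (simp add: divide_le_eq)
  then have DD: "D \<le> pi * \<epsilon> / 2" using n by (simp add: D_def divide_le_eq field_simps)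
  define V where "V = max 1 (2 * (real n + 1) / \<epsilon>)"
  show ?thesis
  proof (intro exI[of _ V] allI impI)
    fix \<nu> assume nuV: "\<nu> \<ge> V"
    have nu: "\<nu> \<ge> 1" using nuV by (simp add: V_def)
    have "2 * (real n + 1) / \<epsilon> \<le> \<nu>" using nuV by (simp add: V_def)
    then have nn: "real n + 1 \<le> \<nu> * \<epsilon> / 2" using eps by (simp add: divide_le_eq field_simps)
    have R: "(\<Sum>i<n. D * ff (1 + real i * D)) \<ge> FF H - D" unfolding D_def
      by (rule riemann(1)[OF n]) (use H in simp)
    have L: "real (card {y. 0 < y \<and> y < \<nu> * H \<and> bessel_J \<nu> y = 0})
       \<ge> \<nu> / pi * (\<Sum>i<n. D * ff (1 + real i * D)) - real n - 1"
      unfolding D_def by (rule lowerN[OF nu H n])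
    have "\<nu> / pi * (FF H - D) \<le> \<nu> / pi * (\<Sum>i<n. D * ff (1 + real i * D))"
      using R nu by (intro mult_left_mono) auto
    moreover have "\<nu> / pi * D \<le> \<nu> * \<epsilon> / 2"
    proof -
      have "\<nu> / pi * D \<le> \<nu> / pi * (pi * \<epsilon> / 2)" using DD nu by (intro mult_left_mono) auto
      also have "\<dots> = \<nu> * \<epsilon> / 2" by simp
      finally show ?thesis .
    qed
    moreover have "\<nu> / pi * (FF H - D) = \<nu> * (FF H / pi) - \<nu> / pi * D" by (simp add: field_simps)
    ultimately show "real (card {y. 0 < y \<and> y < \<nu> * H \<and> bessel_J \<nu> y = 0}) \<ge> \<nu> * (FF H / pi - \<epsilon>)"
      using L nn by (simp add: right_diff_distrib)
  qed
qed

lemma asym_upper: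
  assumes H: "H > 1" and eps: "\<epsilon> > 0"
  shows "\<exists>V. \<forall>\<nu>\<ge>V. real (card {y. 0 < y \<and> y < \<nu> * H \<and> bessel_J \<nu> y = 0}) \<le> \<nu> * (FF H / pi + \<epsilon>)"
proof -
  define n where "n = nat \<lceil>2 * (H - 1) / (pi * \<epsilon>)\<rceil> + 1"
  have n: "n > 0" by (simp add: n_def)
  define D where "D = (H - 1) / real n"
  have "real n \<ge> 2 * (H - 1) / (pi * \<epsilon>)" unfolding n_def by linarith
  then have "2 * (H - 1) \<le> real n * (pi * \<epsilon>)" using eps by (simp add: divide_le_eq)
  then have DD: "D \<le> pi * \<epsilon> / 2" using n by (simp add: D_def divide_le_eq field_simps)
  define C where "C = 2 + (H - 1) / (2 * pi) + real n"
  define V where "V = max 1 (2 * C / \<epsilon>)"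
  show ?thesis
  proof (intro exI[of _ V] allI impI)
    fix \<nu> assume nuV: "\<nu> \<ge> V"
    have nu: "\<nu> \<ge> 1" using nuV by (simp add: V_def)
    have "2 * C / \<epsilon> \<le> \<nu>" using nuV by (simp add: V_def)
    then have nn: "C \<le> \<nu> * \<epsilon> / 2" using eps by (simp add: divide_le_eq field_simps)
    have R: "(\<Sum>i<n. D * ff (1 + real (Suc i) * D)) \<le> FF H + D" unfolding D_def
      by (rule riemann(2)[OF n]) (use H in simp)
    have U: "real (card {y. 0 < y \<and> y < \<nu> * H \<and> bessel_J \<nu> y = 0})
       \<le> 2 + \<nu> / pi * (\<Sum>i<n. D * ff (1 + real (Suc i) * D)) + (H - 1) / (2 * pi) + real n"
      unfolding D_def by (rule upperN[OF nu H n])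
    have a1: "\<nu> / pi * (\<Sum>i<n. D * ff (1 + real (Suc i) * D)) \<le> \<nu> / pi * (FF H + D)"
      using R nu by (intro mult_left_mono) auto
    have a2: "\<nu> / pi * D \<le> \<nu> * \<epsilon> / 2"
    proof -
      have "\<nu> / pi * D \<le> \<nu> / pi * (pi * \<epsilon> / 2)" using DD nu by (intro mult_left_mono) auto
      also have "\<dots> = \<nu> * \<epsilon> / 2" by simp
      finally show ?thesis .
    qed
    have a3: "\<nu> / pi * (FF H + D) = \<nu> * (FF H / pi) + \<nu> / pi * D" by (simp add: field_simps)
    have g: "\<nu> * (FF H / pi + \<epsilon>) = \<nu> * (FF H / pi) + \<nu> * \<epsilon>" by (simp add: distrib_left)
    show "real (card {y. 0 < y \<and> y < \<nu> * H \<and> bessel_J \<nu> y = 0}) \<le> \<nu> * (FF H / pi + \<epsilon>)"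
      unfolding g using U nn a1 a2 a3 unfolding C_def by linarith
  qed
qed

lemma bessel_zero_kth:
  assumes nu: "\<nu> \<ge> 1" and k: "k \<ge> 1"
  shows "kth \<nu> k (bessel_zero \<nu> k)"
proof -
  have "\<exists>!x. kth \<nu> k x"
  proof -
    obtain x where "kth \<nu> (Suc (k - 1)) x" using kth_exists[OF nu] by blast
    then have "kth \<nu> k x" using k by simp
    then show ?thesis using kth_unique by blast
  qed
  then have "kth \<nu> k (THE x. kth \<nu> k x)" by (rule theI')
  then show ?thesis unfolding bessel_zero_def kth_def[symmetric] .
qed

lemma ex_h:
  assumes w: "w > 0"
  shows "\<exists>!h. h > 1 \<and> FF h = pi / w"
proof -
  define b where "b = pi / w + 1 + pi"
  have b: "b \<ge> 1" using w by (simp add: b_def)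
  have "FF 1 \<le> pi / w" using w by (simp add: FF_1)
  moreover have "pi / w \<le> FF b" using FF_lower[OF b] by (simp add: b_def)
  moreover have "continuous_on {1..b} FF" using FF_cont by (rule continuous_on_subset) auto
  ultimately obtain h where h: "1 \<le> h" "h \<le> b" "FF h = pi / w" using IVT'[of FF 1 "pi/w" b] b by auto
  have "h \<noteq> 1" using h w FF_1 by auto
  then have h1: "h > 1" using h by simp
  show ?thesis
  proof (rule ex1I[of _ h])
    show "h > 1 \<and> FF h = pi / w" using h1 h by simp
    fix h' assume h': "h' > 1 \<and> FF h' = pi / w"
    show "h' = h"
    proof (rule ccontr)
      assume "h' \<noteq> h"
      then consider "h' < h" | "h < h'" by linarith
      then show False
        using FF_strict[of h' h] FF_strict[of h h'] h' h h1 by cases auto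
    qed
  qed
qed

lemma main_limit:
  fixes d :: nat and c :: real and nu :: "nat \<Rightarrow> real" and l k :: "nat \<Rightarrow> nat"
  assumes d: "d \<ge> 2" and c: "c \<ge> 0"
    and nu_def: "\<And>m. nu m = sqrt ((real m + real d / 2 - 1)^2 + c^2)"
    and w: "w > 0" and k1: "\<forall>n. k n \<ge> 1"
    and lt: "filterlim l at_top sequentially" and kt: "filterlim k at_top sequentially"
    and lk: "(\<lambda>n. real (l n) / real (k n)) \<longlonglongrightarrow> w"
    and h: "h > 1" "FF h = pi / w"
  shows "(\<lambda>n. bessel_zero (nu (l n)) (k n) / nu (l n)) \<longlonglongrightarrow> h"
proof -
  define a where "a = real d / 2 - 1"
  have a: "a \<ge> 0" using d by (simp add: a_def)
  have nu_a: "nu m = sqrt ((real m + a)^2 + c^2)" for m by (simp add: nu_def a_def add_diff_eq)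
  have nu_ge: "nu m \<ge> real m" for m
  proof -
    have "real m + a \<le> \<bar>real m + a\<bar>" by simp
    also have "\<dots> \<le> sqrt ((real m + a)^2 + c^2)" by (rule real_sqrt_ge_abs1)
    finally have X: "real m + a \<le> sqrt ((real m + a)^2 + c^2)" .
    show ?thesis unfolding nu_a using X a by linarith
  qed
  have nu_le: "nu m \<le> real m + a + c" for m
  proof -
    have "(real m + a)^2 + c^2 \<le> (real m + a + c)^2"
      using a c by (simp add: power2_sum)
    then have "sqrt ((real m + a)^2 + c^2) \<le> real m + a + c"
      by (rule real_le_lsqrt[rotated]) (use a c in simp)
    then show ?thesis by (simp add: nu_a)
  qed
  define V where "V n = nu (l n)" for n
  have evV: "eventually (\<lambda>n. V n \<ge> B) sequentially" for B
  proof -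
    have "eventually (\<lambda>n. nat \<lceil>B\<rceil> \<le> l n) sequentially"
      using lt unfolding filterlim_at_top by blast
    then show ?thesis
    proof (rule eventually_mono)
      fix n assume "nat \<lceil>B\<rceil> \<le> l n"
      then have "B \<le> real (l n)" by linarith
      then show "V n \<ge> B" using nu_ge[of "l n"] by (simp add: V_def)
    qed
  qed
  have kr: "filterlim (\<lambda>n. real (k n)) at_top sequentially"
    by (rule filterlim_compose[OF filterlim_real_sequentially kt])
  have q1: "(\<lambda>n. (V n - real (l n)) / real (k n)) \<longlonglongrightarrow> 0"
  proof (rule tendsto_sandwich[where f = "\<lambda>n. 0" and h = "\<lambda>n. (a + c) / real (k n)"])
    show "eventually (\<lambda>n. 0 \<le> (V n - real (l n)) / real (k n)) sequentially"
      using nu_ge by (auto simp: V_def)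
    show "eventually (\<lambda>n. (V n - real (l n)) / real (k n) \<le> (a + c) / real (k n)) sequentially"
    proof (rule always_eventually, rule allI)
      fix n
      have "V n - real (l n) \<le> a + c" using nu_le[of "l n"] by (simp add: V_def)
      then show "(V n - real (l n)) / real (k n) \<le> (a + c) / real (k n)"
        by (rule divide_right_mono) simp
    qed
    show "(\<lambda>n. (a + c) / real (k n)) \<longlonglongrightarrow> 0"
      by (rule tendsto_divide_0[OF tendsto_const filterlim_at_top_imp_at_infinity[OF kr]])
  qed simp
  have q2: "(\<lambda>n. V n / real (k n)) \<longlonglongrightarrow> w"
  proof -
    have "(\<lambda>n. real (l n) / real (k n) + (V n - real (l n)) / real (k n)) \<longlonglongrightarrow> w + 0"
      by (rule tendsto_add[OF lk q1])
    moreover have "real (l n) / real (k n) + (V n - real (l n)) / real (k n) = V n / real (k n)" for n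
      by (simp add: diff_divide_distrib)
    ultimately show ?thesis by simp
  qed
  have r: "(\<lambda>n. real (k n) / V n) \<longlonglongrightarrow> 1 / w"
  proof -
    have "(\<lambda>n. inverse (V n / real (k n))) \<longlonglongrightarrow> inverse w"
      by (rule tendsto_inverse[OF q2]) (use w in simp)
    then show ?thesis by (simp add: inverse_eq_divide)
  qed
  show ?thesis
    unfolding tendsto_iff
  proof (intro allI impI)
    fix e :: real assume e: "e > 0"
    define \<epsilon> where "\<epsilon> = min e ((h - 1) / 2)"
    have eps2: "\<epsilon> \<le> e" "\<epsilon> \<le> (h - 1) / 2" unfolding \<epsilon>_def by (rule min.cobounded1, rule min.cobounded2)
    have eps: "\<epsilon> > 0" "\<epsilon> \<le> e" "\<epsilon> \<le> (h - 1) / 2" using e h eps2 by (auto simp: \<epsilon>_def)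
    define Hp where "Hp = h + \<epsilon>"
    define Hm where "Hm = h - \<epsilon> / 2"
    have Hp: "Hp > 1" "h < Hp" using h eps by (auto simp: Hp_def)
    have Hm: "Hm > 1" "Hm < h" using h eps by (auto simp: Hm_def)
    define \<delta> where "\<delta> = (FF Hp - FF h) / (2 * pi)"
    define \<delta>' where "\<delta>' = (FF h - FF Hm) / (2 * pi)"
    have dpos: "\<delta> > 0" "\<delta>' > 0"
      using FF_strict[of h Hp] FF_strict[of Hm h] Hp Hm h by (auto simp: \<delta>_def \<delta>'_def)
    have id1: "FF Hp / pi - \<delta> = 1 / w + \<delta>" using h(2) by (simp add: \<delta>_def field_simps)
    have id2: "FF Hm / pi + \<delta>' = 1 / w - \<delta>'" using h(2) by (simp add: \<delta>'_def field_simps)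
    obtain V1 where V1: "\<And>\<nu>. \<nu> \<ge> V1 \<Longrightarrow> real (card {y. 0 < y \<and> y < \<nu> * Hp \<and> bessel_J \<nu> y = 0}) \<ge> \<nu> * (1 / w + \<delta>)"
      using asym_lower[OF Hp(1) dpos(1)] unfolding id1 by blast
    obtain V2 where V2: "\<And>\<nu>. \<nu> \<ge> V2 \<Longrightarrow> real (card {y. 0 < y \<and> y < \<nu> * Hm \<and> bessel_J \<nu> y = 0}) \<le> \<nu> * (1 / w - \<delta>')"
      using asym_upper[OF Hm(1) dpos(2)] unfolding id2 by blast
    have ev: "eventually (\<lambda>n. V n \<ge> max 1 (max V1 V2) \<and> real (k n) / V n < 1 / w + \<delta> \<and> real (k n) / V n > 1 / w - \<delta>') sequentially"
    proof -
      have e2: "eventually (\<lambda>n. real (k n) / V n < 1 / w + \<delta>) sequentially"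
        by (rule order_tendstoD(2)[OF r]) (use dpos in simp)
      have e3: "eventually (\<lambda>n. real (k n) / V n > 1 / w - \<delta>') sequentially"
        by (rule order_tendstoD(1)[OF r]) (use dpos in simp)
      show ?thesis using evV[of "max 1 (max V1 V2)"] e2 e3 by (intro eventually_conj)
    qed
    show "eventually (\<lambda>n. dist (bessel_zero (nu (l n)) (k n) / nu (l n)) h < e) sequentially"
      using ev
    proof (rule eventually_mono)
      fix n assume A: "V n \<ge> max 1 (max V1 V2) \<and> real (k n) / V n < 1 / w + \<delta> \<and> real (k n) / V n > 1 / w - \<delta>'"
      define \<nu> where "\<nu> = V n"
      define K where "K = k n"
      have nu1: "\<nu> \<ge> 1" "\<nu> \<ge> V1" "\<nu> \<ge> V2" using A by (auto simp: \<nu>_def)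
      have K1: "K \<ge> 1" using k1 by (simp add: K_def)
      have rK: "real K = \<nu> * (real K / \<nu>)" using nu1 by simp
      have r1: "real K < \<nu> * (1 / w + \<delta>)"
      proof -
        have "real K / \<nu> < 1 / w + \<delta>" using A by (simp add: \<nu>_def K_def)
        then show ?thesis using nu1 by (simp add: divide_less_eq mult.commute)
      qed
      have r2: "real K > \<nu> * (1 / w - \<delta>')"
      proof -
        have "real K / \<nu> > 1 / w - \<delta>'" using A by (simp add: \<nu>_def K_def)
        then show ?thesis using nu1 by (simp add: less_divide_eq mult.commute)
      qed
      define z where "z = bessel_zero \<nu> K"
      have kz: "kth \<nu> K z" unfolding z_def by (rule bessel_zero_kth[OF nu1(1) K1])
      define Zb where "Zb = {y. 0 < y \<and> y < z \<and> bessel_J \<nu> y = 0}"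
      have Zb: "finite Zb" "card Zb = K - 1" "0 < z" "bessel_J \<nu> z = 0" using kz by (auto simp: kth_def Zb_def)
      have up: "z < \<nu> * Hp"
      proof (rule ccontr)
        assume "\<not> z < \<nu> * Hp"
        then have "{y. 0 < y \<and> y < \<nu> * Hp \<and> bessel_J \<nu> y = 0} \<subseteq> Zb" by (auto simp: Zb_def)
        then have "card {y. 0 < y \<and> y < \<nu> * Hp \<and> bessel_J \<nu> y = 0} \<le> K - 1"
          using card_mono[OF Zb(1)] Zb(2) by simp
        then have "real (card {y. 0 < y \<and> y < \<nu> * Hp \<and> bessel_J \<nu> y = 0}) \<le> real K - 1"
          using K1 by linarith
        then show False using V1[OF nu1(2)] r1 by linarith
      qed
      have lo: "z > \<nu> * (h - \<epsilon>)"
      proof (rule ccontr)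
        assume "\<not> z > \<nu> * (h - \<epsilon>)"
        moreover have "\<nu> * (h - \<epsilon>) < \<nu> * Hm" using nu1 eps by (simp add: Hm_def)
        ultimately have zl: "z < \<nu> * Hm" by simp
        have sub: "insert z Zb \<subseteq> {y. 0 < y \<and> y < \<nu> * Hm \<and> bessel_J \<nu> y = 0}"
          using zl Zb by (auto simp: Zb_def)
        have "card (insert z Zb) = K" using Zb K1 by (simp add: Zb_def)
        moreover have "card (insert z Zb) \<le> card {y. 0 < y \<and> y < \<nu> * Hm \<and> bessel_J \<nu> y = 0}"
          by (rule card_mono[OF zeros_finite_lt[OF nu1(1)] sub])
        ultimately have "real K \<le> real (card {y. 0 < y \<and> y < \<nu> * Hm \<and> bessel_J \<nu> y = 0})" by simp
        then show False using V2[OF nu1(3)] r2 by linarith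
      qed
      have "z / \<nu> < h + \<epsilon>" using up nu1 by (simp add: divide_less_eq Hp_def mult.commute)
      moreover have "z / \<nu> > h - \<epsilon>" using lo nu1 by (simp add: less_divide_eq mult.commute)
      ultimately have "dist (z / \<nu>) h < \<epsilon>" by (simp add: dist_real_def abs_less_iff)
      then show "dist (bessel_zero (nu (l n)) (k n) / nu (l n)) h < e"
        using eps by (simp add: z_def \<nu>_def K_def V_def)
    qed
  qed
qed


theorem lemma2p1:
  fixes d :: nat and c :: real and nu :: "nat \<Rightarrow> real"
  assumes "d \<ge> 2" and "c \<ge> 0"
    and "\<And>l. nu l = sqrt ((real l + real d / 2 - 1)^2 + c^2)"
  shows "(\<forall>w>0. \<exists>!h. h > 1 \<and> sqrt (h^2 - 1) - arcsec h = pi / w)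
    \<and> (\<forall>w>0. \<forall>(l :: nat \<Rightarrow> nat) (k :: nat \<Rightarrow> nat).
          (\<forall>n. k n \<ge> 1) \<and> filterlim l at_top sequentially \<and> filterlim k at_top sequentially
          \<and> ((\<lambda>n. real (l n) / real (k n)) \<longlonglongrightarrow> w)
          \<longrightarrow> ((\<lambda>n. bessel_zero (nu (l n)) (k n) / nu (l n)) \<longlonglongrightarrow>
                 (THE h. h > 1 \<and> sqrt (h^2 - 1) - arcsec h = pi / w)))"
proof -
  have P1: "\<exists>!h. h > 1 \<and> sqrt (h^2 - 1) - arcsec h = pi / w" if "w > 0" for w
    using ex_h[OF that] by (simp add: FF_def)
  show ?thesis
  proof (intro conjI allI impI)
    fix w :: real assume "w > 0"
    then show "\<exists>!h. h > 1 \<and> sqrt (h^2 - 1) - arcsec h = pi / w" by (rule P1)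
  next
    fix w :: real and l k :: "nat \<Rightarrow> nat"
    assume w: "w > 0"
    assume H: "(\<forall>n. k n \<ge> 1) \<and> filterlim l at_top sequentially \<and> filterlim k at_top sequentially
          \<and> ((\<lambda>n. real (l n) / real (k n)) \<longlonglongrightarrow> w)"
    obtain h where h: "h > 1" "sqrt (h^2 - 1) - arcsec h = pi / w" using P1[OF w] by blast
    have the: "(THE h. h > 1 \<and> sqrt (h^2 - 1) - arcsec h = pi / w) = h"
      by (rule the1_equality[OF P1[OF w]]) (use h in simp)
    have hF: "FF h = pi / w" using h by (simp add: FF_def)
    show "(\<lambda>n. bessel_zero (nu (l n)) (k n) / nu (l n)) \<longlonglongrightarrow>
                 (THE h. h > 1 \<and> sqrt (h^2 - 1) - arcsec h = pi / w)"
      unfolding the using main_limit[OF assms w _ _ _ _ h(1) hF] H by blast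
  qed
qed

end
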